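(* Let $G$ be a plane graph and let $s_0,s_1$ be two distinct vertices on the outer face of $G$. Then the weak labelings of $G$ with special vertices $s_0,s_1$ are in bijection with the pairs $(X,X^* )$, where $X$ is a $2$-orientation of $G$ and $X^*$ is a $2^*$-orientation of the split-dual $G^*_s$.
   Context: An angle of a plane graph is an incidence of a vertex with a face, i.e. a corner of a face at a vertex (between two consecutive edges in the rotation at the vertex). A weak labeling of a plane graph $G$ is a map from the angles of $G$ to $\{0,1\}$ such that: (G0) there are two special vertices $s_0,s_1$ on the outer face with all angles at $s_i$ labeled $i$; (G1) for each vertex $v\notin\{s_0,s_1\}$ the labels around $v$ form one non-empty cyclic interval of $1$s and one non-empty cyclic interval of $0$s; (G2) for each edge, the two labels on the two sides of the edge coincide at one endpoint and differ at the other; (G3) for each face (including the outer face), its labels, read cyclically along the face, form one non-empty interval of $1$s and one non-empty interval of $0$s. A $2$-orientation of $G$ (with respect to $s_0,s_1$) is an orientation of the edges in which every vertex other than $s_0,s_1$ has outdegree exactly $2$. The vertices $s_0,s_1$ divide the boundary of the outer face of $G$ into two arcs $A_0,A_1$. The split-dual $G^*_s$ is obtained from the dual graph $G^*$ by splitting the vertex corresponding to the outer face into two vertices $o^*_0,o^*_1$, where $o^*_i$ keeps the incidences with the dual edges of the edges of $A_i$. A $2^*$-orientation of $G^*_s$ is an orientation in which $o^*_0$ and $o^*_1$ have outdegree $1$ and every other vertex has outdegree $2$. *)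

theory Defs
  imports Main "HOL-Library.FuncSet"
begin

text \<open>
  Plane graphs are represented as connected combinatorial maps of genus 0:
  a finite set D of darts (half-edges), a fixed-point-free involution alpha on D
  (the two darts of an edge), and a permutation sigma of D (the rotation: the cyclic
  order of darts around their common vertex).
  An angle (corner) is identified with a dart d: it is the corner at the vertex of d
  between d and sigma d.  This corner lies in the face (phi-orbit) of d, and the
  next corner along that face is phi d.
  The side of an edge traversed along dart d (from the vertex of d to the vertex of
  alpha d) is identified with the dart d; it borders the face containing alpha d,
  and the next side along that face is (sigma o alpha) d.
\<close>

definition orb :: "('a \<Rightarrow> 'a) \<Rightarrow> 'a \<Rightarrow> 'a set" where
  "orb f x = {(f ^^ n) x | n. True}"

definition verts :: "'a set \<Rightarrow> ('a \<Rightarrow> 'a) \<Rightarrow> 'a set set" where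
  "verts D \<sigma> = orb \<sigma> ` D"

definition edges :: "'a set \<Rightarrow> ('a \<Rightarrow> 'a) \<Rightarrow> 'a set set" where
  "edges D \<alpha> = (\<lambda>d. {d, \<alpha> d}) ` D"

definition faces :: "'a set \<Rightarrow> ('a \<Rightarrow> 'a) \<Rightarrow> ('a \<Rightarrow> 'a) \<Rightarrow> 'a set set" where
  "faces D \<alpha> \<sigma> = orb (\<alpha> \<circ> \<sigma>) ` D"

definition plane_map :: "'a set \<Rightarrow> ('a \<Rightarrow> 'a) \<Rightarrow> ('a \<Rightarrow> 'a) \<Rightarrow> bool" where
  "plane_map D \<alpha> \<sigma> \<longleftrightarrow>
     finite D \<and> D \<noteq> {} \<and>
     (\<forall>d\<in>D. \<alpha> d \<in> D \<and> \<alpha> d \<noteq> d \<and> \<alpha> (\<alpha> d) = d) \<and>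
     bij_betw \<sigma> D D \<and>
     (\<forall>d\<in>D. \<alpha> d \<notin> orb \<sigma> d) \<and>
     (\<forall>d\<in>D. \<forall>e\<in>D. (d, e) \<in> ({(x, \<sigma> x) | x. x \<in> D} \<union> {(x, \<alpha> x) | x. x \<in> D})\<^sup>*) \<and>
     int (card (verts D \<sigma>)) - int (card (edges D \<alpha>)) + int (card (faces D \<alpha> \<sigma>)) = 2"

text \<open>Weak labelings (conditions G0--G3).  Labels around a vertex (resp. face) form
  one non-empty cyclic interval of 1s and one of 0s iff exactly two consecutive
  pairs of angles carry different labels.\<close>
definition weak_labeling ::
  "'a set \<Rightarrow> ('a \<Rightarrow> 'a) \<Rightarrow> ('a \<Rightarrow> 'a) \<Rightarrow> 'a set \<Rightarrow> 'a set \<Rightarrow> ('a \<Rightarrow> nat) \<Rightarrow> bool" where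
  "weak_labeling D \<alpha> \<sigma> s0 s1 l \<longleftrightarrow>
     l \<in> D \<rightarrow>\<^sub>E {0, 1} \<and>
     (\<forall>d\<in>s0. l d = 0) \<and> (\<forall>d\<in>s1. l d = 1) \<and>
     (\<forall>v\<in>verts D \<sigma> - {s0, s1}. card {d\<in>v. l d \<noteq> l (\<sigma> d)} = 2) \<and>
     (\<forall>d\<in>D. (l d = l (inv_into D \<sigma> d)) \<noteq> (l (\<alpha> d) = l (inv_into D \<sigma> (\<alpha> d)))) \<and>
     (\<forall>f\<in>faces D \<alpha> \<sigma>. card {d\<in>f. l d \<noteq> l ((\<alpha> \<circ> \<sigma>) d)} = 2)"

definition weak_labelings ::
  "'a set \<Rightarrow> ('a \<Rightarrow> 'a) \<Rightarrow> ('a \<Rightarrow> 'a) \<Rightarrow> 'a set \<Rightarrow> 'a set \<Rightarrow> ('a \<Rightarrow> nat) set" where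
  "weak_labelings D \<alpha> \<sigma> s0 s1 = {l. weak_labeling D \<alpha> \<sigma> s0 s1 l}"

text \<open>An orientation of G is encoded by the set X of darts pointing away from their
  vertex (exactly one dart of each edge).\<close>
definition two_orientations ::
  "'a set \<Rightarrow> ('a \<Rightarrow> 'a) \<Rightarrow> ('a \<Rightarrow> 'a) \<Rightarrow> 'a set \<Rightarrow> 'a set \<Rightarrow> 'a set set" where
  "two_orientations D \<alpha> \<sigma> s0 s1 =
     {X. X \<subseteq> D \<and> (\<forall>d\<in>D. (d \<in> X) \<noteq> (\<alpha> d \<in> X)) \<and>
         (\<forall>v\<in>verts D \<sigma> - {s0, s1}. card (v \<inter> X) = 2)}"

text \<open>Arcs of the outer face: the side d (of the outer face) belongs to arc A_1
  (in_arc ... True d) iff, walking backwards along the outer face boundary from d,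
  the last special vertex met is s1; otherwise it belongs to A_0.\<close>
definition in_arc ::
  "'a set \<Rightarrow> ('a \<Rightarrow> 'a) \<Rightarrow> ('a \<Rightarrow> 'a) \<Rightarrow> 'a set \<Rightarrow> 'a set \<Rightarrow> bool \<Rightarrow> 'a \<Rightarrow> bool" where
  "in_arc D \<alpha> \<sigma> s0 s1 i d \<longleftrightarrow>
     (\<exists>e n. e \<in> D \<and> orb \<sigma> e = (if i then s1 else s0) \<and> ((\<sigma> \<circ> \<alpha>) ^^ n) e = d \<and>
        (\<forall>m. 0 < m \<and> m \<le> n \<longrightarrow> orb \<sigma> (((\<sigma> \<circ> \<alpha>) ^^ m) e) \<notin> {s0, s1}))"

datatype 'a dvert = DFace "'a set" | DOut bool

text \<open>Vertex of the split dual at the end of the dual edge corresponding to side d.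
  DOut False is o*_0 and DOut True is o*_1.\<close>
definition dend ::
  "'a set \<Rightarrow> ('a \<Rightarrow> 'a) \<Rightarrow> ('a \<Rightarrow> 'a) \<Rightarrow> 'a set \<Rightarrow> 'a set \<Rightarrow> 'a set \<Rightarrow> 'a \<Rightarrow> 'a dvert" where
  "dend D \<alpha> \<sigma> out s0 s1 d =
     (if orb (\<alpha> \<circ> \<sigma>) (\<alpha> d) = out then DOut (in_arc D \<alpha> \<sigma> s0 s1 True d)
      else DFace (orb (\<alpha> \<circ> \<sigma>) (\<alpha> d)))"

definition split_dual_verts ::
  "'a set \<Rightarrow> ('a \<Rightarrow> 'a) \<Rightarrow> ('a \<Rightarrow> 'a) \<Rightarrow> 'a set \<Rightarrow> 'a dvert set" where
  "split_dual_verts D \<alpha> \<sigma> out = DFace ` (faces D \<alpha> \<sigma> - {out}) \<union> {DOut False, DOut True}"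

text \<open>An orientation of the split dual is encoded by the set Y of sides d such that
  the dual edge of {d, alpha d} is directed away from its end dend d.\<close>
definition two_star_orientations ::
  "'a set \<Rightarrow> ('a \<Rightarrow> 'a) \<Rightarrow> ('a \<Rightarrow> 'a) \<Rightarrow> 'a set \<Rightarrow> 'a set \<Rightarrow> 'a set \<Rightarrow> 'a set set" where
  "two_star_orientations D \<alpha> \<sigma> out s0 s1 =
     {Y. Y \<subseteq> D \<and> (\<forall>d\<in>D. (d \<in> Y) \<noteq> (\<alpha> d \<in> Y)) \<and>
         (\<forall>x\<in>split_dual_verts D \<alpha> \<sigma> out.
            card {d\<in>Y. dend D \<alpha> \<sigma> out s0 s1 d = x} = (case x of DOut _ \<Rightarrow> 1 | DFace _ \<Rightarrow> 2))}"

end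

theory Submission
  imports Defs
begin

definition sd :: "'a set \<Rightarrow> 'a set \<Rightarrow> 'a set" where
  "sd A B = (A - B) \<union> (B - A)"

lemma card_sd:
  assumes "finite A" "finite B"
  shows "card (sd A B) + 2 * card (A \<inter> B) = card A + card B"
proof -
  have "card A = card (A - B) + card (A \<inter> B)"
  proof -
    have e: "A = (A - B) \<union> (A \<inter> B)" by auto
    have "card ((A - B) \<union> (A \<inter> B)) = card (A - B) + card (A \<inter> B)"
      by (rule card_Un_disjoint) (use assms in auto)
    then show ?thesis using e by simp
  qed
  moreover have "card B = card (B - A) + card (A \<inter> B)"
  proof -
    have e: "B = (B - A) \<union> (A \<inter> B)" by auto
    have "card ((B - A) \<union> (A \<inter> B)) = card (B - A) + card (A \<inter> B)"
      by (rule card_Un_disjoint) (use assms in auto)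
    then show ?thesis using e by simp
  qed
  moreover have "card (sd A B) = card (A - B) + card (B - A)"
    unfolding sd_def using assms by (intro card_Un_disjoint) auto
  ultimately show ?thesis by simp
qed

lemma odd_card_sd:
  assumes "finite A" "finite B"
  shows "odd (card (sd A B)) \<longleftrightarrow> (odd (card A) \<noteq> odd (card B))"
proof -
  have h: "card (sd A B) + 2 * card (A \<inter> B) = card A + card B" by (rule card_sd[OF assms])
  have "odd x \<longleftrightarrow> (odd a \<noteq> odd b)" if "x + 2*k = a + b" for x k a b :: nat using that by presburger
  from this[OF h] show ?thesis .
qed

lemma sd_Int: "sd A B \<inter> C = sd (A \<inter> C) (B \<inter> C)"
  unfolding sd_def by auto

lemma mem_sd: "x \<in> sd A B \<longleftrightarrow> (x \<in> A) \<noteq> (x \<in> B)" unfolding sd_def by auto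

lemma sd_self[simp]: "sd A A = {}" unfolding sd_def by auto
lemma sd_empty[simp]: "sd A {} = A" "sd {} A = A" unfolding sd_def by auto
lemma sd_assoc: "sd (sd A B) C = sd A (sd B C)" unfolding sd_def by auto
lemma sd_comm: "sd A B = sd B A" unfolding sd_def by auto
lemma sd_sub: "A \<subseteq> S \<Longrightarrow> B \<subseteq> S \<Longrightarrow> sd A B \<subseteq> S" unfolding sd_def by auto

lemma hom_card:
  assumes fin: "finite S"
    and hom: "\<And>x y. x \<subseteq> S \<Longrightarrow> y \<subseteq> S \<Longrightarrow> h (sd x y) = sd (h x) (h y)"
  shows "card (Pow S) = card (h ` Pow S) * card {x \<in> Pow S. h x = {}}"
proof -
  let ?K = "{x \<in> Pow S. h x = {}}"
  have fibre: "card {x \<in> Pow S. h x = t} = card ?K" if tin: "t \<in> h ` Pow S" for t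
  proof -
    obtain x0 where x0: "x0 \<subseteq> S" "h x0 = t" using tin by (auto simp: image_iff)
    have "bij_betw (\<lambda>k. sd k x0) ?K {x \<in> Pow S. h x = t}"
    proof (rule bij_betwI[where g="\<lambda>k. sd k x0"])
      show "(\<lambda>k. sd k x0) \<in> ?K \<rightarrow> {x \<in> Pow S. h x = t}"
      proof
        fix k assume k: "k \<in> ?K"
        then have "k \<subseteq> S" "h k = {}" by auto
        then have "sd k x0 \<subseteq> S" "h (sd k x0) = t" using x0 hom[of k x0] sd_sub[of k S x0] by auto
        then show "sd k x0 \<in> {x \<in> Pow S. h x = t}" by blast
      qed
      show "(\<lambda>k. sd k x0) \<in> {x \<in> Pow S. h x = t} \<rightarrow> ?K"
      proof
        fix k assume k: "k \<in> {x \<in> Pow S. h x = t}"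
        then have "k \<subseteq> S" "h k = t" by auto
        then have "sd k x0 \<subseteq> S" "h (sd k x0) = {}" using x0 hom[of k x0] sd_sub[of k S x0] by auto
        then show "sd k x0 \<in> ?K" by blast
      qed
      show "sd (sd x x0) x0 = x" for x by (simp add: sd_assoc)
      show "sd (sd y x0) x0 = y" for y by (simp add: sd_assoc)
    qed
    from bij_betw_same_card[OF this] show ?thesis by (rule sym)
  qed
  have eq: "Pow S = (\<Union>t\<in>h ` Pow S. {x \<in> Pow S. h x = t})" by blast
  have c1: "card (Pow S) = card (\<Union>t\<in>h ` Pow S. {x \<in> Pow S. h x = t})" by (rule arg_cong[OF eq])
  have "card (\<Union>t\<in>h ` Pow S. {x \<in> Pow S. h x = t}) = (\<Sum>t\<in>h ` Pow S. card {x \<in> Pow S. h x = t})"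
  proof (rule card_UN_disjoint)
    show "finite (h ` Pow S)" using fin by simp
    show "\<forall>i\<in>h ` Pow S. finite {x \<in> Pow S. h x = i}" using fin by simp
    show "\<forall>i\<in>h ` Pow S. \<forall>j\<in>h ` Pow S. i \<noteq> j \<longrightarrow> {x \<in> Pow S. h x = i} \<inter> {x \<in> Pow S. h x = j} = {}"
      by blast
  qed
  with c1 have "card (Pow S) = (\<Sum>t\<in>h ` Pow S. card {x \<in> Pow S. h x = t})" by (rule trans)
  also have "\<dots> = (\<Sum>t\<in>h ` Pow S. card ?K)" by (intro sum.cong refl fibre)
  finally show ?thesis by simp
qed

lemma card_even_subsets:
  assumes "finite C" "C \<noteq> {}"
  shows "card {T. T \<subseteq> C \<and> even (card T)} = 2 ^ (card C - 1)"
proof -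
  obtain a where a: "a \<in> C" using assms by auto
  let ?C' = "C - {a}"
  have "bij_betw (\<lambda>T. T - {a}) {T. T \<subseteq> C \<and> even (card T)} (Pow ?C')"
  proof (rule bij_betwI[where g="\<lambda>S. if even (card S) then S else insert a S"])
    show "(\<lambda>T. T - {a}) \<in> {T. T \<subseteq> C \<and> even (card T)} \<rightarrow> Pow ?C'" by auto
    show "(\<lambda>S. if even (card S) then S else insert a S) \<in> Pow ?C' \<rightarrow> {T. T \<subseteq> C \<and> even (card T)}"
    proof
      fix S assume "S \<in> Pow ?C'"
      then have "S \<subseteq> C" "a \<notin> S" "finite S" using assms(1) finite_subset by auto
      then show "(if even (card S) then S else insert a S) \<in> {T. T \<subseteq> C \<and> even (card T)}"
        using a by auto
    qed
    fix T assume T: "T \<in> {T. T \<subseteq> C \<and> even (card T)}"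
    then have fT: "finite T" using assms(1) finite_subset by auto
    show "(if even (card (T - {a})) then T - {a} else insert a (T - {a})) = T"
    proof (cases "a \<in> T")
      case True
      then have "card (T - {a}) = card T - 1" using fT by simp
      moreover have "card T > 0" using True fT card_gt_0_iff by blast
      ultimately have "odd (card (T - {a}))" using T by auto
      then show ?thesis using True by auto
    next
      case False then show ?thesis using T by auto
    qed
  next
    fix S assume S: "S \<in> Pow ?C'"
    then have "a \<notin> S" by auto
    then show "(if even (card S) then S else insert a S) - {a} = S" by auto
  qed
  then have "card {T. T \<subseteq> C \<and> even (card T)} = card (Pow ?C')" by (metis bij_betw_same_card)
  also have "\<dots> = 2 ^ (card C - 1)" using assms a by (simp add: card_Pow)
  finally show ?thesis .
qed


locale bijfin =
  fixes D :: "'a set" and f :: "'a \<Rightarrow> 'a"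
  assumes finD: "finite D" and bij: "bij_betw f D D"
begin

lemma f_in: "x \<in> D \<Longrightarrow> f x \<in> D"
  using bij by (auto simp: bij_betw_def)

lemma f_inj: "x \<in> D \<Longrightarrow> y \<in> D \<Longrightarrow> f x = f y \<Longrightarrow> x = y"
  using bij by (auto simp: bij_betw_def inj_on_def)

lemma funpow_in: "x \<in> D \<Longrightarrow> (f ^^ n) x \<in> D"
  by (induction n) (auto simp: f_in)

lemma funpow_inj: "x \<in> D \<Longrightarrow> y \<in> D \<Longrightarrow> (f ^^ n) x = (f ^^ n) y \<Longrightarrow> x = y"
proof (induction n)
  case 0 then show ?case by simp
next
  case (Suc n)
  then have "(f ^^ n) x = (f ^^ n) y" using f_inj funpow_in by simp
  then show ?case using Suc by blast
qed

lemma orb_sub: "x \<in> D \<Longrightarrow> orb f x \<subseteq> D"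
  unfolding orb_def using funpow_in by auto

lemma in_orb_self: "x \<in> orb f x"
  unfolding orb_def by (auto intro: exI[of _ 0])

lemma funpow_in_orb: "(f ^^ n) x \<in> orb f x"
  unfolding orb_def by auto

lemma orb_f_in: assumes "y \<in> orb f x" shows "f y \<in> orb f x"
proof -
  obtain n where "y = (f ^^ n) x" using assms unfolding orb_def by auto
  then have "f y = (f ^^ Suc n) x" by simp
  then show ?thesis unfolding orb_def by blast
qed

lemma orb_trans: assumes "y \<in> orb f x" "z \<in> orb f y" shows "z \<in> orb f x"
proof -
  obtain n where n: "y = (f ^^ n) x" using assms unfolding orb_def by auto
  obtain m where m: "z = (f ^^ m) y" using assms unfolding orb_def by auto
  have "z = (f ^^ (m + n)) x" using n m by (simp add: funpow_add)
  then show ?thesis unfolding orb_def by blast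
qed

lemma period: assumes "x \<in> D" shows "\<exists>n>0. (f ^^ n) x = x"
proof -
  let ?g = "\<lambda>i. (f ^^ i) x"
  have "\<not> inj_on ?g {..card D}"
  proof
    assume "inj_on ?g {..card D}"
    moreover have "?g ` {..card D} \<subseteq> D" using funpow_in assms by auto
    ultimately have "card {..card D} \<le> card D" using card_inj_on_le finD by blast
    then show False by simp
  qed
  then obtain i j where ij: "i \<le> card D" "j \<le> card D" "i \<noteq> j" "?g i = ?g j"
    unfolding inj_on_def by auto
  {
    fix i j assume ij: "i < j" "?g i = ?g j"
    have "(f ^^ i) ((f ^^ (j - i)) x) = (f ^^ j) x"
      using ij by (metis add_diff_inverse_nat comp_apply funpow_add less_imp_le_nat not_le)
    then have "(f ^^ i) ((f ^^ (j - i)) x) = (f ^^ i) x" using ij by simp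
    then have "(f ^^ (j - i)) x = x" using funpow_inj funpow_in assms by blast
    then have "\<exists>n>0. (f ^^ n) x = x" using ij by (intro exI[of _ "j - i"]) auto
  }
  then show ?thesis using ij by (metis linorder_neqE_nat)
qed

lemma funpow_mult_period: "(f ^^ n) x = x \<Longrightarrow> (f ^^ (n * k)) x = x"
  by (induction k) (auto simp: funpow_add)

lemma orb_sym: assumes "x \<in> D" "y \<in> orb f x" shows "x \<in> orb f y"
proof -
  obtain m where m: "y = (f ^^ m) x" using assms(2) unfolding orb_def by auto
  obtain n where n: "n > 0" "(f ^^ n) x = x" using period assms(1) by blast
  have "n * (m + 1) \<ge> m" using n(1) by (simp add: trans_le_add2)
  then have "(f ^^ (n * (m + 1) - m)) y = (f ^^ (n * (m + 1))) x"
    unfolding m by (metis funpow_add le_add_diff_inverse2 comp_apply)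
  also have "\<dots> = x" using funpow_mult_period n(2) by blast
  finally show ?thesis unfolding orb_def by (metis (mono_tags, lifting) mem_Collect_eq)
qed

lemma orb_eq: assumes "x \<in> D" "y \<in> orb f x" shows "orb f y = orb f x"
  using orb_trans orb_sym assms by blast

lemma orb_disj: assumes "x \<in> D" "y \<in> D" "z \<in> orb f x" "z \<in> orb f y" shows "orb f x = orb f y"
  using orb_eq assms by metis

lemma orb_f: "x \<in> D \<Longrightarrow> orb f (f x) = orb f x"
  using orb_eq orb_f_in in_orb_self by blast

lemma finite_orb: "x \<in> D \<Longrightarrow> finite (orb f x)"
  using orb_sub finD finite_subset by blast

lemma orb_bij: assumes "x \<in> D" shows "bij_betw f (orb f x) (orb f x)"
proof -
  have "inj_on f (orb f x)" using orb_sub[OF assms] f_inj by (meson inj_onI subsetD)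
  moreover have "f ` orb f x \<subseteq> orb f x" using orb_f_in by auto
  ultimately have "f ` orb f x = orb f x" using endo_inj_surj finite_orb assms by blast
  then show ?thesis using \<open>inj_on f (orb f x)\<close> by (simp add: bij_betw_def)
qed

definition finv where "finv = inv_into D f"

lemma finv_in: "x \<in> D \<Longrightarrow> finv x \<in> D"
  unfolding finv_def using bij by (metis bij_betw_def inv_into_into)

lemma f_finv: "x \<in> D \<Longrightarrow> f (finv x) = x"
  unfolding finv_def using bij by (meson bij_betw_inv_into_right)

lemma finv_f: "x \<in> D \<Longrightarrow> finv (f x) = x"
  unfolding finv_def using bij by (meson bij_betw_inv_into_left)

lemma finv_in_orb: assumes "x \<in> D" "y \<in> orb f x" shows "finv y \<in> orb f x"
proof -
  have yD: "y \<in> D" using assms orb_sub by blast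
  have "y \<in> orb f (finv y)" using f_finv[OF yD] in_orb_self orb_f_in by metis
  then have "finv y \<in> orb f y" using orb_sym finv_in yD by blast
  then show ?thesis using orb_trans assms by blast
qed

lemma orb_finv: "x \<in> D \<Longrightarrow> orb f (finv x) = orb f x"
  using finv_in_orb orb_eq in_orb_self by blast

definition per where "per x = (LEAST n. n > 0 \<and> (f ^^ n) x = x)"

lemma per: assumes "x \<in> D" shows "per x > 0" "(f ^^ per x) x = x"
  using LeastI_ex[OF period[OF assms]] unfolding per_def by auto

lemma per_min: "0 < n \<Longrightarrow> n < per x \<Longrightarrow> (f ^^ n) x \<noteq> x"
  unfolding per_def using not_less_Least by blast

lemma funpow_mod: assumes "x \<in> D" shows "(f ^^ n) x = (f ^^ (n mod per x)) x"
proof -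
  have "n = n mod per x + per x * (n div per x)" by simp
  then have "(f ^^ n) x = (f ^^ (n mod per x)) ((f ^^ (per x * (n div per x))) x)"
    by (metis funpow_add comp_apply)
  also have "(f ^^ (per x * (n div per x))) x = x" using funpow_mult_period per[OF assms] by blast
  finally show ?thesis .
qed

lemma funpow_inj_per: assumes "x \<in> D" "i < per x" "j < per x" "(f ^^ i) x = (f ^^ j) x"
  shows "i = j"
proof (rule ccontr)
  assume "i \<noteq> j"
  {
    fix i j assume ij: "i < j" "j < per x" "(f ^^ i) x = (f ^^ j) x"
    have "(f ^^ i) ((f ^^ (j - i)) x) = (f ^^ j) x"
      using ij by (metis add_diff_inverse_nat comp_apply funpow_add less_imp_le_nat not_le)
    then have "(f ^^ (j - i)) x = x" using ij funpow_inj funpow_in assms(1) by metis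
    moreover have "0 < j - i" "j - i < per x" using ij by auto
    ultimately have False using per_min by blast
  }
  then show False using assms \<open>i \<noteq> j\<close> by (metis linorder_neqE_nat)
qed

lemma orb_idx: assumes "x \<in> D" "y \<in> orb f x" shows "\<exists>i < per x. y = (f ^^ i) x"
proof -
  obtain n where "y = (f ^^ n) x" using assms unfolding orb_def by auto
  then show ?thesis using funpow_mod[OF assms(1)] per[OF assms(1)] by (metis mod_less_divisor)
qed

end


locale pm =
  fixes D :: "'a set" and \<alpha> \<sigma> :: "'a \<Rightarrow> 'a"
  assumes pm: "plane_map D \<alpha> \<sigma>"
begin

lemma finD: "finite D" and Dne: "D \<noteq> {}"
  and a_in: "d \<in> D \<Longrightarrow> \<alpha> d \<in> D" and a_ne: "d \<in> D \<Longrightarrow> \<alpha> d \<noteq> d"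
  and aa: "d \<in> D \<Longrightarrow> \<alpha> (\<alpha> d) = d"
  and bs: "bij_betw \<sigma> D D"
  and loopless: "d \<in> D \<Longrightarrow> \<alpha> d \<notin> orb \<sigma> d"
  and conn: "d \<in> D \<Longrightarrow> e \<in> D \<Longrightarrow> (d, e) \<in> ({(x, \<sigma> x) | x. x \<in> D} \<union> {(x, \<alpha> x) | x. x \<in> D})\<^sup>*"
  and euler: "int (card (verts D \<sigma>)) - int (card (edges D \<alpha>)) + int (card (faces D \<alpha> \<sigma>)) = 2"
  using pm unfolding plane_map_def by auto

lemma ba: "bij_betw \<alpha> D D"
proof (rule bij_betwI[where g=\<alpha>])
  show "\<alpha> \<in> D \<rightarrow> D" "\<alpha> \<in> D \<rightarrow> D" using a_in by auto
  show "\<And>x. x \<in> D \<Longrightarrow> \<alpha> (\<alpha> x) = x" "\<And>x. x \<in> D \<Longrightarrow> \<alpha> (\<alpha> x) = x" using aa by auto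
qed

abbreviation "\<phi> \<equiv> \<alpha> \<circ> \<sigma>"
abbreviation "\<psi> \<equiv> \<sigma> \<circ> \<alpha>"

sublocale S: bijfin D \<sigma> using finD bs by unfold_locales
sublocale P: bijfin D \<phi>
  by unfold_locales (use finD bij_betw_trans[OF bs ba] in auto)
sublocale Q: bijfin D \<psi>
  by unfold_locales (use finD bij_betw_trans[OF ba bs] in auto)

abbreviation "si \<equiv> S.finv"

lemma si_def': "si = inv_into D \<sigma>" unfolding S.finv_def ..

lemma s_in: "d \<in> D \<Longrightarrow> \<sigma> d \<in> D" using S.f_in .

lemma a_psi_pow: "d \<in> D \<Longrightarrow> \<alpha> ((\<psi> ^^ n) d) = (\<phi> ^^ n) (\<alpha> d)"
proof (induction n)
  case 0 then show ?case by simp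
next
  case (Suc n)
  have "(\<psi> ^^ n) d \<in> D" using Q.funpow_in Suc by blast
  then have "\<alpha> ((\<psi> ^^ Suc n) d) = \<phi> (\<alpha> ((\<psi> ^^ n) d))" using aa by simp
  then show ?case using Suc by simp
qed

lemma psi_pow_a: "d \<in> D \<Longrightarrow> (\<psi> ^^ n) d = \<alpha> ((\<phi> ^^ n) (\<alpha> d))"
  using a_psi_pow aa Q.funpow_in by metis

lemma verts_finite: "finite (verts D \<sigma>)" unfolding verts_def using finD by simp
lemma faces_finite: "finite (faces D \<alpha> \<sigma>)" unfolding faces_def using finD by simp
lemma edges_finite: "finite (edges D \<alpha>)" unfolding edges_def using finD by simp

lemma edge_eq: assumes "d \<in> D" "e \<in> D" "d \<in> {e, \<alpha> e}" shows "{d, \<alpha> d} = {e, \<alpha> e}"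
  using assms aa by auto

lemma card_D_edges: "card D = 2 * card (edges D \<alpha>)"
proof -
  have U: "\<Union> (edges D \<alpha>) = D" unfolding edges_def using a_in by auto
  have "card (\<Union> (edges D \<alpha>)) = sum card (edges D \<alpha>)"
  proof (rule card_Union_disjoint)
    show "pairwise disjnt (edges D \<alpha>)"
      unfolding pairwise_def disjnt_def
    proof (intro ballI impI)
      fix A B assume A: "A \<in> edges D \<alpha>" and B: "B \<in> edges D \<alpha>" and AB: "A \<noteq> B"
      show "A \<inter> B = {}"
      proof (rule ccontr)
        assume "A \<inter> B \<noteq> {}"
        then obtain z where z: "z \<in> A" "z \<in> B" by auto
        obtain x where x: "x \<in> D" "A = {x, \<alpha> x}" using A unfolding edges_def by auto
        obtain y where y: "y \<in> D" "B = {y, \<alpha> y}" using B unfolding edges_def by auto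
        have zD: "z \<in> D" using z x a_in by auto
        have "{z, \<alpha> z} = A" using edge_eq[OF zD x(1)] z x by auto
        moreover have "{z, \<alpha> z} = B" using edge_eq[OF zD y(1)] z y by auto
        ultimately show False using AB by simp
      qed
    qed
    show "\<And>A. A \<in> edges D \<alpha> \<Longrightarrow> finite A" unfolding edges_def by auto
  qed
  also have "\<dots> = sum (\<lambda>_. 2) (edges D \<alpha>)"
  proof (rule sum.cong)
    fix A assume "A \<in> edges D \<alpha>"
    then obtain d where "d \<in> D" "A = {d, \<alpha> d}" unfolding edges_def by auto
    then show "card A = 2" using a_ne[of d] by (auto simp: card_insert_if)
  qed simp
  finally show ?thesis using U by simp
qed

lemma euler': "card (verts D \<sigma>) + card (faces D \<alpha> \<sigma>) = card (edges D \<alpha>) + 2"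
  using euler by linarith

lemma vert_of: "v \<in> verts D \<sigma> \<Longrightarrow> d \<in> v \<Longrightarrow> v = orb \<sigma> d"
  unfolding verts_def using S.orb_eq by auto

lemma face_of: "f \<in> faces D \<alpha> \<sigma> \<Longrightarrow> d \<in> f \<Longrightarrow> f = orb \<phi> d"
  unfolding faces_def using P.orb_eq by auto

lemma vert_sub: "v \<in> verts D \<sigma> \<Longrightarrow> v \<subseteq> D"
  unfolding verts_def using S.orb_sub by auto

lemma face_sub: "f \<in> faces D \<alpha> \<sigma> \<Longrightarrow> f \<subseteq> D"
  unfolding faces_def using P.orb_sub by auto

lemma vert_ne: "v \<in> verts D \<sigma> \<Longrightarrow> v \<noteq> {}"
  unfolding verts_def using S.in_orb_self by auto

lemma face_ne: "f \<in> faces D \<alpha> \<sigma> \<Longrightarrow> f \<noteq> {}"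
  unfolding faces_def using P.in_orb_self by auto

lemma closed_all:
  assumes "L \<subseteq> D" "x \<in> L" "\<And>d. d \<in> L \<Longrightarrow> \<sigma> d \<in> L" "\<And>d. d \<in> L \<Longrightarrow> \<alpha> d \<in> L"
  shows "L = D"
proof
  show "D \<subseteq> L"
  proof
    fix e assume e: "e \<in> D"
    have xD: "x \<in> D" using assms by auto
    have "(x, e) \<in> ({(x, \<sigma> x) | x. x \<in> D} \<union> {(x, \<alpha> x) | x. x \<in> D})\<^sup>*" using conn xD e by blast
    then show "e \<in> L"
    proof (induction rule: rtrancl_induct)
      case base then show ?case using assms by simp
    next
      case (step y z) then show ?case using assms by auto
    qed
  qed
qed (use assms in auto)

end


lemma parity_bij:
  fixes P :: "'a \<Rightarrow> bool"
  assumes "finite v" "bij_betw g v v"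
  shows "even (card {d \<in> v. P d \<noteq> P (g d)})"
proof -
  let ?A = "{d \<in> v. P d \<and> \<not> P (g d)}" and ?B = "{d \<in> v. \<not> P d \<and> P (g d)}"
  let ?C = "{d \<in> v. P d \<and> P (g d)}"
  have "g ` {d \<in> v. P (g d)} = {d \<in> v. P d}"
    using assms(2) unfolding bij_betw_def by auto
  moreover have "inj_on g {d \<in> v. P (g d)}"
    using assms(2) unfolding bij_betw_def by (auto intro: inj_on_subset)
  ultimately have e1: "card {d \<in> v. P (g d)} = card {d \<in> v. P d}"
    using card_image by fastforce
  have u2: "{d \<in> v. P d} = ?C \<union> ?A" by auto
  have "card (?C \<union> ?A) = card ?C + card ?A" by (rule card_Un_disjoint) (use assms(1) in auto)
  then have e2: "card {d \<in> v. P d} = card ?C + card ?A" using u2 by simp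
  have u3: "{d \<in> v. P (g d)} = ?C \<union> ?B" by auto
  have "card (?C \<union> ?B) = card ?C + card ?B" by (rule card_Un_disjoint) (use assms(1) in auto)
  then have e3: "card {d \<in> v. P (g d)} = card ?C + card ?B" using u3 by simp
  have u4: "{d \<in> v. P d \<noteq> P (g d)} = ?A \<union> ?B" by auto
  have "card (?A \<union> ?B) = card ?A + card ?B" by (rule card_Un_disjoint) (use assms(1) in auto)
  then have e4: "card {d \<in> v. P d \<noteq> P (g d)} = card ?A + card ?B" using u4 by simp
  show ?thesis using e1 e2 e3 e4 by simp
qed

lemma card4:
  assumes "a \<noteq> b" "a \<noteq> c" "a \<noteq> d" "b \<noteq> c" "b \<noteq> d" "c \<noteq> d"
  shows "card (A \<inter> {a, b, c, d}) = of_bool (a \<in> A) + of_bool (b \<in> A) + of_bool (c \<in> A) + of_bool (d \<in> A)"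
  using assms by (auto simp: card_insert_if Int_insert_right)

type_synonym 'x cyc = "'x set + 'x set + 'x set"

context pm
begin

definition St :: "(bool \<times> 'a) set" where "St = UNIV \<times> D"

definition Cyc :: "('a set + 'a set + 'a set) set" where
  "Cyc = Inl ` verts D \<sigma> \<union> Inr ` Inl ` faces D \<alpha> \<sigma> \<union> Inr ` Inr ` edges D \<alpha>"

definition cs :: "('a set + 'a set + 'a set) \<Rightarrow> (bool \<times> 'a) set" where
  "cs c = (case c of Inl v \<Rightarrow> Pair False ` v
     | Inr (Inl f) \<Rightarrow> Pair True ` {d \<in> D. \<alpha> d \<in> f}
     | Inr (Inr e) \<Rightarrow> UNIV \<times> e)"

lemma cs_simps[simp]:
  "cs (Inl v) = Pair False ` v"
  "cs (Inr (Inl f)) = Pair True ` {d \<in> D. \<alpha> d \<in> f}"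
  "cs (Inr (Inr e)) = UNIV \<times> e"
  unfolding cs_def by auto

definition Phi :: "(bool \<times> 'a) set \<Rightarrow> ('a set + 'a set + 'a set) set" where
  "Phi z = {c \<in> Cyc. odd (card (z \<inter> cs c))}"

definition vc :: "'a \<Rightarrow> 'a cyc" where "vc d = Inl (orb \<sigma> d)"
definition fc :: "'a \<Rightarrow> 'a cyc" where "fc d = Inr (Inl (orb \<phi> (\<alpha> d)))"
definition ec :: "'a \<Rightarrow> 'a cyc" where "ec d = Inr (Inr {d, \<alpha> d})"

lemma finite_St: "finite St" unfolding St_def using finD by simp

lemma vc_in: "d \<in> D \<Longrightarrow> vc d \<in> Cyc" unfolding vc_def Cyc_def verts_def by auto
lemma fc_in: "d \<in> D \<Longrightarrow> fc d \<in> Cyc" unfolding fc_def Cyc_def faces_def using a_in by auto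
lemma ec_in: "d \<in> D \<Longrightarrow> ec d \<in> Cyc" unfolding ec_def Cyc_def edges_def by auto

lemma vc_ne_ec[simp]: "vc d \<noteq> ec e" unfolding vc_def ec_def by simp
lemma fc_ne_ec[simp]: "fc d \<noteq> ec e" unfolding fc_def ec_def by simp
lemma ec_ne_vc[simp]: "ec d \<noteq> vc e" unfolding vc_def ec_def by simp
lemma ec_ne_fc[simp]: "ec d \<noteq> fc e" unfolding fc_def ec_def by simp

lemma mem_cs_F:
  assumes "d \<in> D" "c \<in> Cyc"
  shows "(False, d) \<in> cs c \<longleftrightarrow> c = vc d \<or> c = ec d"
  using assms(2) unfolding Cyc_def
proof (elim UnE imageE)
  fix v assume v: "v \<in> verts D \<sigma>" "c = Inl v"
  have "d \<in> v \<longleftrightarrow> v = orb \<sigma> d" using vert_of[OF v(1)] S.in_orb_self by blast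
  then show ?thesis using v by (auto simp: vc_def ec_def)
next
  fix f x assume "c = Inr x" "x = Inl f"
  then show ?thesis by (auto simp: vc_def ec_def)
next
  fix e x assume ex: "c = Inr x" "x = Inr e" "e \<in> edges D \<alpha>"
  then obtain y where y: "y \<in> D" "e = {y, \<alpha> y}" unfolding edges_def by auto
  have "d \<in> e \<longleftrightarrow> e = {d, \<alpha> d}" using edge_eq[OF assms(1) y(1)] y by auto
  then show ?thesis using ex by (auto simp: vc_def ec_def)
qed

lemma mem_cs_T:
  assumes "d \<in> D" "c \<in> Cyc"
  shows "(True, d) \<in> cs c \<longleftrightarrow> c = fc d \<or> c = ec d"
  using assms(2) unfolding Cyc_def
proof (elim UnE imageE)
  fix v assume v: "c = Inl v"
  then show ?thesis by (auto simp: fc_def ec_def)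
next
  fix f x assume fx: "c = Inr x" "x = Inl f" "f \<in> faces D \<alpha> \<sigma>"
  have "\<alpha> d \<in> f \<longleftrightarrow> f = orb \<phi> (\<alpha> d)" using face_of[OF fx(3)] P.in_orb_self by blast
  then show ?thesis using fx assms(1) by (auto simp: fc_def ec_def)
next
  fix e x assume ex: "c = Inr x" "x = Inr e" "e \<in> edges D \<alpha>"
  then obtain y where y: "y \<in> D" "e = {y, \<alpha> y}" unfolding edges_def by auto
  have "d \<in> e \<longleftrightarrow> e = {d, \<alpha> d}" using edge_eq[OF assms(1) y(1)] y by auto
  then show ?thesis using ex by (auto simp: fc_def ec_def)
qed

lemma Phi_single: "Phi {s} = {c \<in> Cyc. s \<in> cs c}"
  unfolding Phi_def by (auto simp: Int_insert_left)

lemma Phi_F: "d \<in> D \<Longrightarrow> Phi {(False, d)} = {vc d, ec d}"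
  unfolding Phi_single using mem_cs_F vc_in ec_in by auto

lemma Phi_T: "d \<in> D \<Longrightarrow> Phi {(True, d)} = {fc d, ec d}"
  unfolding Phi_single using mem_cs_T fc_in ec_in by auto

lemma Phi_hom: assumes "finite z" "finite w" shows "Phi (sd z w) = sd (Phi z) (Phi w)"
proof -
  have "odd (card (sd z w \<inter> cs c)) \<longleftrightarrow> (odd (card (z \<inter> cs c)) \<noteq> odd (card (w \<inter> cs c)))" for c
  proof -
    have "finite (z \<inter> cs c)" "finite (w \<inter> cs c)" using assms by auto
    from odd_card_sd[OF this] show ?thesis unfolding sd_Int .
  qed
  note h = this
  show ?thesis
  proof (rule set_eqI)
    fix c
    have "c \<in> Phi (sd z w) \<longleftrightarrow> c \<in> Cyc \<and> odd (card (sd z w \<inter> cs c))" unfolding Phi_def by simp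
    also have "\<dots> \<longleftrightarrow> c \<in> Cyc \<and> (odd (card (z \<inter> cs c)) \<noteq> odd (card (w \<inter> cs c)))" using h[of c] by simp
    also have "\<dots> \<longleftrightarrow> (c \<in> Phi z) \<noteq> (c \<in> Phi w)" unfolding Phi_def by auto
    also have "\<dots> \<longleftrightarrow> c \<in> sd (Phi z) (Phi w)" by (simp add: mem_sd)
    finally show "c \<in> Phi (sd z w) \<longleftrightarrow> c \<in> sd (Phi z) (Phi w)" .
  qed
qed

lemma Phi_empty[simp]: "Phi {} = {}" unfolding Phi_def by simp

lemma card_Cyc: "card Cyc = card D + 2"
proof -
  have fin: "finite (verts D \<sigma>)" "finite (faces D \<alpha> \<sigma>)" "finite (edges D \<alpha>)"
    using verts_finite faces_finite edges_finite by auto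
  have "card Cyc = card (Inl ` verts D \<sigma> :: 'a cyc set) + card (Inr ` Inl ` faces D \<alpha> \<sigma> \<union> Inr ` Inr ` edges D \<alpha> :: 'a cyc set)"
    unfolding Cyc_def Un_assoc by (rule card_Un_disjoint) (use fin in auto)
  also have "card (Inr ` Inl ` faces D \<alpha> \<sigma> \<union> Inr ` Inr ` edges D \<alpha> :: 'a cyc set)
      = card (Inr ` Inl ` faces D \<alpha> \<sigma> :: ('a set + 'a set + 'a set) set) + card (Inr ` Inr ` edges D \<alpha> :: ('a set + 'a set + 'a set) set)"
    by (rule card_Un_disjoint) (use fin in auto)
  also have "card (Inl ` verts D \<sigma> :: ('a set + 'a set + 'a set) set) = card (verts D \<sigma>)"
    by (rule card_image) (simp add: inj_on_def)
  also have "card (Inr ` Inl ` faces D \<alpha> \<sigma> :: ('a set + 'a set + 'a set) set) = card (faces D \<alpha> \<sigma>)"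
    by (subst image_image, subst card_image) (auto simp: inj_on_def)
  also have "card (Inr ` Inr ` edges D \<alpha> :: ('a set + 'a set + 'a set) set) = card (edges D \<alpha>)"
    by (subst image_image, subst card_image) (auto simp: inj_on_def)
  finally show ?thesis using euler' card_D_edges by simp
qed

lemma finite_Cyc: "finite Cyc"
  unfolding Cyc_def using verts_finite faces_finite edges_finite by simp

abbreviation "IM \<equiv> Phi ` Pow St"

lemma IM_sd: "A \<in> IM \<Longrightarrow> B \<in> IM \<Longrightarrow> sd A B \<in> IM"
proof -
  assume "A \<in> IM" "B \<in> IM"
  then obtain z w where zw: "z \<subseteq> St" "w \<subseteq> St" "A = Phi z" "B = Phi w" by auto
  have "finite z" "finite w" using zw finite_St finite_subset by auto
  then have "sd A B = Phi (sd z w)" using Phi_hom zw by simp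
  moreover have "sd z w \<subseteq> St" using zw sd_sub by blast
  ultimately show ?thesis by blast
qed

lemma IM_F: assumes "d \<in> D" shows "{vc d, ec d} \<in> IM"
proof -
  have "{(False, d)} \<in> Pow St" using assms unfolding St_def by auto
  then have "Phi {(False, d)} \<in> IM" by (rule imageI)
  then show ?thesis using Phi_F[OF assms] by simp
qed

lemma IM_T: assumes "d \<in> D" shows "{fc d, ec d} \<in> IM"
proof -
  have "{(True, d)} \<in> Pow St" using assms unfolding St_def by auto
  then have "Phi {(True, d)} \<in> IM" by (rule imageI)
  then show ?thesis using Phi_T[OF assms] by simp
qed

lemma all_pairs:
  assumes c1: "c1 \<in> Cyc" and c2: "c2 \<in> Cyc" and ne: "c1 \<noteq> c2"
  shows "{c1, c2} \<in> IM"
proof -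
  obtain d0 where d0: "d0 \<in> D" using Dne by auto
  define c0 where "c0 = ec d0"
  define R where "R c \<longleftrightarrow> c = c0 \<or> {c0, c} \<in> IM" for c :: "'a set + 'a set + 'a set"
  have adj: "R c'" if "R c" "{c, c'} \<in> IM" "c \<noteq> c'" for c c'
  proof (cases "c' = c0")
    case True then show ?thesis unfolding R_def by simp
  next
    case False
    show ?thesis
    proof (cases "c = c0")
      case True then show ?thesis using that unfolding R_def by simp
    next
      case cne: False
      then have "{c0, c} \<in> IM" using that unfolding R_def by simp
      then have "sd {c0, c} {c, c'} \<in> IM" using IM_sd that by blast
      moreover have "sd {c0, c} {c, c'} = {c0, c'}" using cne False that unfolding sd_def by auto
      ultimately show ?thesis unfolding R_def by simp
    qed
  qed
  have adj': "R c'" if "R c" "{c', c} \<in> IM" "c \<noteq> c'" for c c'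
    using adj[of c c'] that by (simp add: insert_commute)
  have M: "{d \<in> D. R (ec d)} = D"
  proof (rule closed_all)
    show "{d \<in> D. R (ec d)} \<subseteq> D" by auto
    show "d0 \<in> {d \<in> D. R (ec d)}" using d0 unfolding R_def c0_def by simp
  next
    fix d assume d: "d \<in> {d \<in> D. R (ec d)}"
    then have dD: "d \<in> D" and "R (ec d)" by auto
    then have "R (vc d)" using adj'[of "ec d" "vc d"] IM_F[OF dD] by simp
    moreover have "vc (\<sigma> d) = vc d" unfolding vc_def using S.orb_f dD by simp
    ultimately have "R (vc (\<sigma> d))" by simp
    then have "R (ec (\<sigma> d))" using adj[of "vc (\<sigma> d)" "ec (\<sigma> d)"] IM_F s_in dD by simp
    then show "\<sigma> d \<in> {d \<in> D. R (ec d)}" using s_in dD by simp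
  next
    fix d assume d: "d \<in> {d \<in> D. R (ec d)}"
    then have dD: "d \<in> D" and "R (ec d)" by auto
    moreover have "ec (\<alpha> d) = ec d" unfolding ec_def using aa dD by auto
    ultimately show "\<alpha> d \<in> {d \<in> D. R (ec d)}" using a_in by simp
  qed
  have Rall: "R c" if "c \<in> Cyc" for c
    using that unfolding Cyc_def
  proof (elim UnE imageE)
    fix v assume v: "v \<in> verts D \<sigma>" "c = Inl v"
    then obtain d where d: "d \<in> D" "v = orb \<sigma> d" unfolding verts_def by auto
    then have "R (ec d)" using M by auto
    then have "R (vc d)" using adj'[of "ec d" "vc d"] IM_F[OF d(1)] by simp
    then show ?thesis using v d unfolding vc_def by simp
  next
    fix f x assume fx: "c = Inr x" "x = Inl f" "f \<in> faces D \<alpha> \<sigma>"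
    then obtain y where y: "y \<in> D" "f = orb \<phi> y" unfolding faces_def by auto
    have dD: "\<sigma> y \<in> D" using s_in y by simp
    have "fc (\<sigma> y) = Inr (Inl (orb \<phi> (\<phi> y)))" unfolding fc_def by simp
    also have "\<dots> = c" using P.orb_f y fx by simp
    finally have fcc: "fc (\<sigma> y) = c" .
    have "R (ec (\<sigma> y))" using M dD by auto
    then have "R (fc (\<sigma> y))" using adj'[of "ec (\<sigma> y)" "fc (\<sigma> y)"] IM_T[OF dD] by simp
    then show ?thesis using fcc by simp
  next
    fix e x assume ex: "c = Inr x" "x = Inr e" "e \<in> edges D \<alpha>"
    then obtain y where y: "y \<in> D" "e = {y, \<alpha> y}" unfolding edges_def by auto
    then have "c = ec y" using ex unfolding ec_def by simp
    then show ?thesis using M y by auto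
  qed
  show ?thesis
  proof (cases "c1 = c0")
    case True
    then show ?thesis using Rall[OF c2] ne unfolding R_def by auto
  next
    case False
    show ?thesis
    proof (cases "c2 = c0")
      case True
      then show ?thesis using Rall[OF c1] ne False unfolding R_def by (auto simp: insert_commute)
    next
      case F2: False
      have "{c0, c1} \<in> IM" "{c0, c2} \<in> IM" using Rall c1 c2 False F2 unfolding R_def by auto
      then have "sd {c0, c1} {c0, c2} \<in> IM" using IM_sd by blast
      moreover have "sd {c0, c1} {c0, c2} = {c1, c2}" using False F2 ne unfolding sd_def by auto
      ultimately show ?thesis by simp
    qed
  qed
qed

lemma even_in_IM:
  assumes "T \<subseteq> Cyc" "even (card T)"
  shows "T \<in> IM"
  using assms
proof (induction "card T" arbitrary: T rule: less_induct)
  case less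
  show ?case
  proof (cases "T = {}")
    case True
    have "{} \<in> Pow St" by simp
    then show ?thesis using True Phi_empty by (metis image_eqI)
  next
    case False
    then obtain c1 where c1: "c1 \<in> T" by auto
    have finT: "finite T" using less.prems finite_Cyc finite_subset by blast
    have "card T \<noteq> 1" using less.prems by auto
    have "T - {c1} \<noteq> {}"
    proof
      assume "T - {c1} = {}"
      then have "T = {c1}" using c1 by auto
      then show False using \<open>card T \<noteq> 1\<close> by simp
    qed
    then obtain c2 where c2: "c2 \<in> T" "c2 \<noteq> c1" by auto
    let ?T' = "T - {c1, c2}"
    have sub: "{c1, c2} \<subseteq> T" using c1 c2 by auto
    have c12: "card {c1, c2} = 2" using c2 by simp
    have cT': "card ?T' = card T - 2" using card_Diff_subset[OF _ sub] c12 by simp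
    have "card {c1, c2} \<le> card T" using card_mono[OF finT sub] .
    then have "card T \<ge> 2" using c12 by simp
    then have "card ?T' < card T" "even (card ?T')" using cT' less.prems by auto
    then have "?T' \<in> IM" using less.hyps less.prems by auto
    moreover have "{c1, c2} \<in> IM" using all_pairs c1 c2 less.prems by blast
    ultimately have "sd ?T' {c2, c1} \<in> IM" using IM_sd by (simp add: insert_commute)
    moreover have "sd ?T' {c2, c1} = T" using c1 c2 unfolding sd_def by auto
    ultimately show ?thesis by simp
  qed
qed

lemma card_ker_Phi: "card {z \<in> Pow St. Phi z = {}} \<le> 2 ^ (card D - 1)"
proof -
  let ?n = "card D"
  have n1: "?n \<ge> 1" using Dne finD by (simp add: Suc_leI card_gt_0_iff)
  have "{T. T \<subseteq> Cyc \<and> even (card T)} \<subseteq> IM" using even_in_IM by blast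
  moreover have "finite IM" using finite_St by simp
  ultimately have "card {T. T \<subseteq> Cyc \<and> even (card T)} \<le> card IM" by (rule card_mono[rotated])
  moreover have "card {T. T \<subseteq> Cyc \<and> even (card T)} = 2 ^ (card Cyc - 1)"
  proof (rule card_even_subsets[OF finite_Cyc])
    show "Cyc \<noteq> {}" using card_Cyc by auto
  qed
  ultimately have i1: "2 ^ (?n + 1) \<le> card IM" using card_Cyc by simp
  have "card (Pow St) = card IM * card {z \<in> Pow St. Phi z = {}}"
    by (rule hom_card[OF finite_St]) (use Phi_hom finite_St finite_subset in blast)
  moreover have "card (Pow St) = 2 ^ (2 * ?n)"
    unfolding St_def using finD by (simp add: card_Pow card_cartesian_product)
  ultimately have le: "2 ^ (?n + 1) * card {z \<in> Pow St. Phi z = {}} \<le> 2 ^ (2 * ?n)"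
    using mult_le_mono1[OF i1, of "card {z \<in> Pow St. Phi z = {}}"] by simp
  have ex: "2 * ?n = (?n + 1) + (?n - 1)" using n1 by simp
  have "(2::nat) ^ (2 * ?n) = 2 ^ (?n + 1) * 2 ^ (?n - 1)"
    unfolding ex by (rule power_add)
  with le show ?thesis by simp
qed

end


context pm
begin

definition cob :: "'a set \<Rightarrow> (bool \<times> 'a) set" where
  "cob L = Pair False ` {d \<in> D. (d \<in> L) \<noteq> (si d \<in> L)} \<union> Pair True ` {d \<in> D. (si d \<in> L) \<noteq> (\<alpha> d \<in> L)}"

lemma mem_cob: "(b, d) \<in> cob L \<longleftrightarrow> d \<in> D \<and> (if b then (si d \<in> L) \<noteq> (\<alpha> d \<in> L) else (d \<in> L) \<noteq> (si d \<in> L))"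
  unfolding cob_def by (cases b) auto

lemma cob_sub: "cob L \<subseteq> St"
  unfolding cob_def St_def by auto

lemma cob_hom: "cob (sd L M) = sd (cob L) (cob M)"
proof (rule set_eqI)
  fix x :: "bool \<times> 'a"
  obtain b d where x: "x = (b, d)" by (cases x)
  show "x \<in> cob (sd L M) \<longleftrightarrow> x \<in> sd (cob L) (cob M)"
    unfolding x mem_sd mem_cob by (cases b) auto
qed

lemma cob_empty: "cob {} = {}" unfolding cob_def by auto
lemma cob_D: "cob D = {}" unfolding cob_def using S.finv_in a_in by auto

lemma cob_ker: assumes "L \<subseteq> D" "cob L = {}" "L \<noteq> {}" shows "L = D"
proof -
  have F: "(d \<in> L) = (si d \<in> L)" if "d \<in> D" for d
    using assms(2) mem_cob[of False d L] that by auto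
  have T: "(si d \<in> L) = (\<alpha> d \<in> L)" if "d \<in> D" for d
    using assms(2) mem_cob[of True d L] that by auto
  obtain x where x: "x \<in> L" using assms(3) by auto
  show ?thesis
  proof (rule closed_all[OF assms(1) x])
    fix d assume d: "d \<in> L"
    then have dD: "d \<in> D" using assms(1) by auto
    show "\<sigma> d \<in> L" using F[OF s_in[OF dD]] S.finv_f[OF dD] d by simp
    show "\<alpha> d \<in> L" using F[OF dD] T[OF dD] d by simp
  qed
qed

lemma card_cob_image: "card (cob ` Pow D) = 2 ^ (card D - 1)"
proof -
  have "card (Pow D) = card (cob ` Pow D) * card {x \<in> Pow D. cob x = {}}"
    by (rule hom_card[OF finD]) (rule cob_hom)
  moreover have "{x \<in> Pow D. cob x = {}} = {{}, D}"
    using cob_ker cob_empty cob_D by auto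
  moreover have "card {{}, D} = 2" using Dne by simp
  ultimately have "2 ^ card D = card (cob ` Pow D) * 2" using finD by (simp add: card_Pow)
  moreover have "card D \<ge> 1" using Dne finD by (simp add: Suc_leI card_gt_0_iff)
  ultimately show ?thesis
    by (metis Suc_diff_le diff_Suc_1 mult.commute nonzero_mult_div_cancel_left power_Suc zero_neq_numeral)
qed

lemma si_face: assumes "d \<in> D" "\<alpha> d \<in> orb \<phi> x" "x \<in> D" shows "si d \<in> orb \<phi> x"
proof -
  have sd: "si d \<in> D" using S.finv_in assms by blast
  have "\<phi> (si d) = \<alpha> d" using S.f_finv assms by simp
  then have "orb \<phi> (si d) = orb \<phi> (\<alpha> d)" using P.orb_f sd by metis
  also have "\<dots> = orb \<phi> x" using P.orb_eq assms by blast
  finally show ?thesis using P.in_orb_self by metis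
qed

lemma cob_vertex_even: assumes "x \<in> D" "L \<subseteq> D"
  shows "even (card (cob L \<inter> Pair False ` orb \<sigma> x))"
proof -
  let ?v = "orb \<sigma> x"
  have vD: "?v \<subseteq> D" using S.orb_sub assms by blast
  have "cob L \<inter> Pair False ` ?v = Pair False ` {d \<in> ?v. (d \<in> L) \<noteq> (si d \<in> L)}"
    using vD unfolding cob_def by auto
  then have "card (cob L \<inter> Pair False ` ?v) = card {d \<in> ?v. (d \<in> L) \<noteq> (si d \<in> L)}"
    by (simp add: card_image inj_on_def)
  also have "{d \<in> ?v. (d \<in> L) \<noteq> (si d \<in> L)} = \<sigma> ` {c \<in> ?v. (c \<in> L) \<noteq> (\<sigma> c \<in> L)}"
  proof
    show "{d \<in> ?v. (d \<in> L) \<noteq> (si d \<in> L)} \<subseteq> \<sigma> ` {c \<in> ?v. (c \<in> L) \<noteq> (\<sigma> c \<in> L)}"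
    proof
      fix d assume d: "d \<in> {d \<in> ?v. (d \<in> L) \<noteq> (si d \<in> L)}"
      then have dD: "d \<in> D" using vD by auto
      have "si d \<in> ?v" using S.finv_in_orb assms d by blast
      moreover have "\<sigma> (si d) = d" using S.f_finv dD by blast
      ultimately show "d \<in> \<sigma> ` {c \<in> ?v. (c \<in> L) \<noteq> (\<sigma> c \<in> L)}"
        using d by (intro image_eqI[where x="si d"]) auto
    qed
    show "\<sigma> ` {c \<in> ?v. (c \<in> L) \<noteq> (\<sigma> c \<in> L)} \<subseteq> {d \<in> ?v. (d \<in> L) \<noteq> (si d \<in> L)}"
      using S.orb_f_in S.finv_f vD by auto
  qed
  also have "card (\<sigma> ` {c \<in> ?v. (c \<in> L) \<noteq> (\<sigma> c \<in> L)}) = card {c \<in> ?v. (c \<in> L) \<noteq> (\<sigma> c \<in> L)}"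
    by (rule card_image) (use S.f_inj vD in \<open>auto simp: inj_on_def\<close>)
  finally have eq: "card (cob L \<inter> Pair False ` ?v) = card {c \<in> ?v. (c \<in> L) \<noteq> (\<sigma> c \<in> L)}" .
  have "even (card {c \<in> ?v. (c \<in> L) \<noteq> (\<sigma> c \<in> L)})"
    using parity_bij[OF S.finite_orb[OF assms(1)] S.orb_bij[OF assms(1)], of "\<lambda>d. d \<in> L"] .
  then show ?thesis unfolding eq .
qed

lemma cob_face_even: assumes "x \<in> D" "L \<subseteq> D"
  shows "even (card (cob L \<inter> Pair True ` {d \<in> D. \<alpha> d \<in> orb \<phi> x}))"
proof -
  let ?f = "orb \<phi> x"
  have fD: "?f \<subseteq> D" using P.orb_sub assms by blast
  have "cob L \<inter> Pair True ` {d \<in> D. \<alpha> d \<in> ?f} = Pair True ` {d \<in> D. \<alpha> d \<in> ?f \<and> (si d \<in> L) \<noteq> (\<alpha> d \<in> L)}"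
    unfolding cob_def by auto
  then have "card (cob L \<inter> Pair True ` {d \<in> D. \<alpha> d \<in> ?f}) = card {d \<in> D. \<alpha> d \<in> ?f \<and> (si d \<in> L) \<noteq> (\<alpha> d \<in> L)}"
    by (simp add: card_image inj_on_def)
  also have "{d \<in> D. \<alpha> d \<in> ?f \<and> (si d \<in> L) \<noteq> (\<alpha> d \<in> L)} = \<sigma> ` {c \<in> ?f. (c \<in> L) \<noteq> (\<phi> c \<in> L)}"
  proof
    show "{d \<in> D. \<alpha> d \<in> ?f \<and> (si d \<in> L) \<noteq> (\<alpha> d \<in> L)} \<subseteq> \<sigma> ` {c \<in> ?f. (c \<in> L) \<noteq> (\<phi> c \<in> L)}"
    proof
      fix d assume d: "d \<in> {d \<in> D. \<alpha> d \<in> ?f \<and> (si d \<in> L) \<noteq> (\<alpha> d \<in> L)}"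
      then have dD: "d \<in> D" by auto
      have "si d \<in> ?f" using si_face d assms by blast
      moreover have sd: "\<sigma> (si d) = d" using S.f_finv dD by blast
      moreover have "\<phi> (si d) = \<alpha> d" using sd by simp
      ultimately show "d \<in> \<sigma> ` {c \<in> ?f. (c \<in> L) \<noteq> (\<phi> c \<in> L)}"
        using d by (intro image_eqI[where x="si d"]) auto
    qed
    show "\<sigma> ` {c \<in> ?f. (c \<in> L) \<noteq> (\<phi> c \<in> L)} \<subseteq> {d \<in> D. \<alpha> d \<in> ?f \<and> (si d \<in> L) \<noteq> (\<alpha> d \<in> L)}"
    proof
      fix d assume "d \<in> \<sigma> ` {c \<in> ?f. (c \<in> L) \<noteq> (\<phi> c \<in> L)}"
      then obtain c where c: "c \<in> ?f" "(c \<in> L) \<noteq> (\<phi> c \<in> L)" "d = \<sigma> c" by auto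
      have cD: "c \<in> D" using c fD by auto
      have "\<alpha> d = \<phi> c" using c by simp
      moreover have "\<phi> c \<in> ?f" using P.orb_f_in c by blast
      moreover have "si d = c" using S.finv_f cD c by simp
      ultimately show "d \<in> {d \<in> D. \<alpha> d \<in> ?f \<and> (si d \<in> L) \<noteq> (\<alpha> d \<in> L)}"
        using c s_in cD by auto
    qed
  qed
  also have "card (\<sigma> ` {c \<in> ?f. (c \<in> L) \<noteq> (\<phi> c \<in> L)}) = card {c \<in> ?f. (c \<in> L) \<noteq> (\<phi> c \<in> L)}"
    by (rule card_image) (use S.f_inj fD in \<open>auto simp: inj_on_def\<close>)
  finally have eq: "card (cob L \<inter> Pair True ` {d \<in> D. \<alpha> d \<in> ?f}) = card {c \<in> ?f. (c \<in> L) \<noteq> (\<phi> c \<in> L)}" .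
  have "even (card {c \<in> ?f. (c \<in> L) \<noteq> (\<phi> c \<in> L)})"
    using parity_bij[OF P.finite_orb[OF assms(1)] P.orb_bij[OF assms(1)], of "\<lambda>d. d \<in> L"] .
  then show ?thesis unfolding eq .
qed

lemma edge_steps: "UNIV \<times> {x, y} = {(False, x), (False, y), (True, x), (True, y)}"
proof (rule set_eqI)
  fix p :: "bool \<times> 'b"
  obtain b u where "p = (b, u)" by (cases p)
  then show "p \<in> UNIV \<times> {x, y} \<longleftrightarrow> p \<in> {(False, x), (False, y), (True, x), (True, y)}"
    by (cases b) auto
qed

lemma card_edge_steps:
  assumes "x \<in> D"
  shows "card (A \<inter> (UNIV \<times> {x, \<alpha> x})) = of_bool ((False, x) \<in> A) + of_bool ((False, \<alpha> x) \<in> A)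
     + of_bool ((True, x) \<in> A) + of_bool ((True, \<alpha> x) \<in> A)"
  unfolding edge_steps using a_ne[OF assms] by (intro card4) auto

lemma cob_edge_even: assumes "x \<in> D" "L \<subseteq> D"
  shows "even (card (cob L \<inter> (UNIV \<times> {x, \<alpha> x})))"
proof -
  have ax: "\<alpha> x \<in> D" "\<alpha> (\<alpha> x) = x" using a_in aa assms by auto
  show ?thesis unfolding card_edge_steps[OF assms(1)] mem_cob using assms(1) ax
    by (cases "x \<in> L"; cases "si x \<in> L"; cases "\<alpha> x \<in> L"; cases "si (\<alpha> x) \<in> L") auto
qed

lemma cob_cocycle: assumes "L \<subseteq> D" shows "Phi (cob L) = {}"
proof -
  have "even (card (cob L \<inter> cs c))" if "c \<in> Cyc" for c
    using that unfolding Cyc_def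
  proof (elim UnE imageE)
    fix v assume v: "v \<in> verts D \<sigma>" "c = Inl v"
    then obtain x where "x \<in> D" "v = orb \<sigma> x" unfolding verts_def by auto
    then show ?thesis using v cob_vertex_even assms by simp
  next
    fix f y assume fy: "c = Inr y" "y = Inl f" "f \<in> faces D \<alpha> \<sigma>"
    then obtain x where "x \<in> D" "f = orb \<phi> x" unfolding faces_def by auto
    then show ?thesis using fy cob_face_even assms by simp
  next
    fix e y assume ey: "c = Inr y" "y = Inr e" "e \<in> edges D \<alpha>"
    then obtain x where "x \<in> D" "e = {x, \<alpha> x}" unfolding edges_def by auto
    then show ?thesis using ey cob_edge_even assms by simp
  qed
  then show ?thesis unfolding Phi_def by auto
qed

theorem cocycle: assumes "z \<subseteq> St" "Phi z = {}" shows "\<exists>L \<subseteq> D. cob L = z"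
proof -
  let ?K = "{z \<in> Pow St. Phi z = {}}"
  have sub: "cob ` Pow D \<subseteq> ?K" using cob_cocycle cob_sub by auto
  have "finite ?K" using finite_St by simp
  moreover have "card ?K \<le> card (cob ` Pow D)" using card_ker_Phi card_cob_image by simp
  ultimately have "cob ` Pow D = ?K" using card_seteq[OF _ sub] by blast
  then have "z \<in> cob ` Pow D" using assms by auto
  then show ?thesis by auto
qed

end


locale pm2 = pm D \<alpha> \<sigma> for D :: "'a set" and \<alpha> \<sigma> +
  fixes out s0 s1 :: "'a set"
  assumes out: "out \<in> faces D \<alpha> \<sigma>"
    and s0v: "s0 \<in> verts D \<sigma>" and s1v: "s1 \<in> verts D \<sigma>" and s01: "s0 \<noteq> s1"
    and s0o: "s0 \<inter> out \<noteq> {}" and s1o: "s1 \<inter> out \<noteq> {}"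
begin

definition spec :: "'a \<Rightarrow> bool" where "spec x \<longleftrightarrow> orb \<sigma> x = s0 \<or> orb \<sigma> x = s1"

definition So :: "'a set" where "So = {d \<in> D. \<alpha> d \<in> out}"

definition LSW :: "'a \<Rightarrow> 'a \<Rightarrow> nat \<Rightarrow> bool" where
  "LSW d e n \<longleftrightarrow> e \<in> D \<and> spec e \<and> (\<psi> ^^ n) e = d \<and> (\<forall>m. 0 < m \<and> m \<le> n \<longrightarrow> \<not> spec ((\<psi> ^^ m) e))"

lemma LSW_unique_aux:
  assumes "LSW d e n" "LSW d e' n'" "n \<le> n'" shows "e = e'"
proof -
  have eD: "e \<in> D" "e' \<in> D" using assms unfolding LSW_def by auto
  have "(\<psi> ^^ n') e' = (\<psi> ^^ n) ((\<psi> ^^ (n' - n)) e')"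
    using assms(3) by (metis funpow_add le_add_diff_inverse comp_apply)
  then have "(\<psi> ^^ n) ((\<psi> ^^ (n' - n)) e') = (\<psi> ^^ n) e" using assms unfolding LSW_def by simp
  then have eq: "(\<psi> ^^ (n' - n)) e' = e" using Q.funpow_inj Q.funpow_in eD by blast
  show ?thesis
  proof (cases "n' = n")
    case True then show ?thesis using eq by simp
  next
    case False
    then have "0 < n' - n" "n' - n \<le> n'" using assms(3) by auto
    then have "\<not> spec ((\<psi> ^^ (n' - n)) e')" using assms(2) unfolding LSW_def by blast
    then show ?thesis using eq assms(1) unfolding LSW_def by simp
  qed
qed

lemma LSW_unique: "LSW d e n \<Longrightarrow> LSW d e' n' \<Longrightarrow> e = e'"
  using LSW_unique_aux by (metis nat_le_linear)

lemma in_arc_LSW: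
  assumes "LSW d e n"
  shows "in_arc D \<alpha> \<sigma> s0 s1 True d \<longleftrightarrow> orb \<sigma> e = s1"
proof
  assume "in_arc D \<alpha> \<sigma> s0 s1 True d"
  then obtain e' n' where e': "e' \<in> D" "orb \<sigma> e' = s1" "(\<psi> ^^ n') e' = d"
    "\<forall>m. 0 < m \<and> m \<le> n' \<longrightarrow> orb \<sigma> ((\<psi> ^^ m) e') \<notin> {s0, s1}"
    unfolding in_arc_def by auto
  then have "LSW d e' n'" unfolding LSW_def spec_def by auto
  then have "e' = e" using LSW_unique assms by blast
  then show "orb \<sigma> e = s1" using e' by simp
next
  assume "orb \<sigma> e = s1"
  then show "in_arc D \<alpha> \<sigma> s0 s1 True d"
    using assms unfolding in_arc_def LSW_def spec_def by auto
qed

definition sstar :: 'a where "sstar = (SOME d. d \<in> So \<and> orb \<sigma> d = s0)"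

lemma sstar: "sstar \<in> So" "orb \<sigma> sstar = s0"
proof -
  obtain w where w: "w \<in> s0" "w \<in> out" using s0o by auto
  have wD: "w \<in> D" using w out face_sub by auto
  have "\<sigma> w \<in> D" using s_in wD by simp
  moreover have "\<alpha> (\<sigma> w) \<in> out" using face_of[OF out w(2)] P.orb_f_in P.in_orb_self by auto
  moreover have "orb \<sigma> (\<sigma> w) = s0" using S.orb_f wD vert_of[OF s0v w(1)] by simp
  ultimately have "\<exists>d. d \<in> So \<and> orb \<sigma> d = s0" unfolding So_def by blast
  then show "sstar \<in> So" "orb \<sigma> sstar = s0" unfolding sstar_def by (metis (mono_tags, lifting) someI_ex)+
qed

lemma sstarD: "sstar \<in> D" using sstar unfolding So_def by auto

lemma spec_sstar: "spec sstar" using sstar unfolding spec_def by simp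

definition side :: "nat \<Rightarrow> 'a" where "side i = (\<psi> ^^ i) sstar"

abbreviation "p \<equiv> Q.per sstar"

lemma side_D: "side i \<in> D" unfolding side_def using Q.funpow_in sstarD by blast

lemma out_eq: "out = orb \<phi> (\<alpha> sstar)"
  using face_of[OF out] sstar unfolding So_def by auto

lemma out_mem: "x \<in> out \<longleftrightarrow> x \<in> orb \<phi> (\<alpha> sstar)"
  using out_eq by auto

lemma side_So: "side i \<in> So"
proof -
  have "\<alpha> (side i) = (\<phi> ^^ i) (\<alpha> sstar)" unfolding side_def using a_psi_pow sstarD by blast
  moreover have "(\<phi> ^^ i) (\<alpha> sstar) \<in> orb \<phi> (\<alpha> sstar)" by (rule P.funpow_in_orb)
  ultimately have "\<alpha> (side i) \<in> out" unfolding out_mem by simp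
  then show ?thesis using side_D unfolding So_def by simp
qed

lemma So_side: assumes "d \<in> So" shows "\<exists>i < p. d = side i"
proof -
  have dD: "d \<in> D" and "\<alpha> d \<in> out" using assms unfolding So_def by auto
  then obtain n where n: "\<alpha> d = (\<phi> ^^ n) (\<alpha> sstar)" unfolding out_mem unfolding orb_def by auto
  have "d = \<alpha> (\<alpha> d)" using aa dD by simp
  also have "\<dots> = (\<psi> ^^ n) sstar" using n psi_pow_a sstarD by simp
  finally have "d \<in> orb \<psi> sstar" unfolding orb_def by blast
  then obtain i where "i < p" "d = (\<psi> ^^ i) sstar" using Q.orb_idx sstarD by blast
  then show ?thesis unfolding side_def by blast
qed

lemma side_inj: "i < p \<Longrightarrow> j < p \<Longrightarrow> side i = side j \<Longrightarrow> i = j"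
  unfolding side_def using Q.funpow_inj_per sstarD by blast

lemma side_Suc: "side (Suc i) = \<sigma> (\<alpha> (side i))" unfolding side_def by simp

lemma si_side_Suc: "si (side (Suc i)) = \<alpha> (side i)"
  unfolding side_Suc using S.finv_f a_in side_D by simp

lemma side_add: "(\<psi> ^^ m) (side j) = side (j + m)"
  unfolding side_def by (metis comp_apply funpow_add add.commute)

lemma corner_side: assumes "w \<in> out" shows "\<exists>i < p. si (side i) = w"
proof -
  have wD: "w \<in> D" using assms out face_sub by auto
  have "\<alpha> (\<sigma> w) \<in> out" using face_of[OF out assms] P.orb_f_in P.in_orb_self by auto
  then have "\<sigma> w \<in> So" using s_in wD unfolding So_def by simp
  then obtain i where "i < p" "\<sigma> w = side i" using So_side by blast
  then show ?thesis using S.finv_f wD by metis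
qed

lemma orb_si_side: "orb \<sigma> (si (side i)) = orb \<sigma> (side i)"
  using S.orb_finv side_D by blast

lemma LS_exists: "\<exists>j \<le> i. spec (side j) \<and> (\<forall>k. j < k \<and> k \<le> i \<longrightarrow> \<not> spec (side k))"
proof (induction i)
  case 0
  then show ?case using spec_sstar unfolding side_def by auto
next
  case (Suc i)
  then obtain j where j: "j \<le> i" "spec (side j)" "\<forall>k. j < k \<and> k \<le> i \<longrightarrow> \<not> spec (side k)" by blast
  show ?case
  proof (cases "spec (side (Suc i))")
    case True then show ?thesis by (intro exI[of _ "Suc i"]) auto
  next
    case False
    then show ?thesis using j by (intro exI[of _ j]) (auto simp: le_Suc_eq)
  qed
qed

lemma LSW_side:
  assumes "j \<le> i" "spec (side j)" "\<forall>k. j < k \<and> k \<le> i \<longrightarrow> \<not> spec (side k)"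
  shows "LSW (side i) (side j) (i - j)"
  unfolding LSW_def
proof (intro conjI allI impI)
  show "side j \<in> D" by (rule side_D)
  show "spec (side j)" by fact
  show "(\<psi> ^^ (i - j)) (side j) = side i" using side_add assms(1) by simp
  fix m assume "0 < m \<and> m \<le> i - j"
  then have "j < j + m" "j + m \<le> i" by auto
  then show "\<not> spec ((\<psi> ^^ m) (side j))" using side_add assms(3) by simp
qed

end


context pm2
begin

definition Chg :: "'a set \<Rightarrow> 'a set" where
  "Chg L = {d \<in> So. (si d \<in> L) \<noteq> (\<alpha> d \<in> L)}"

definition cv :: "'a set \<Rightarrow> nat \<Rightarrow> bool" where
  "cv L i \<longleftrightarrow> si (side i) \<in> L"

lemma chg_side: "side i \<in> Chg L \<longleftrightarrow> cv L i \<noteq> cv L (Suc i)"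
  unfolding Chg_def cv_def si_side_Suc using side_So by simp

lemma two_idx:
  assumes "card (Chg L) = 2"
  shows "\<exists>a b. a < b \<and> b < p \<and> Chg L = {side a, side b}"
proof -
  obtain x y where xy: "Chg L = {x, y}" "x \<noteq> y" using assms card_2_iff by metis
  have "x \<in> So" "y \<in> So" using xy unfolding Chg_def by auto
  then obtain a b where ab: "a < p" "x = side a" "b < p" "y = side b" using So_side by metis
  have "a \<noteq> b" using ab xy by auto
  then show ?thesis
  proof (cases "a < b")
    case True then show ?thesis using ab xy by blast
  next
    case False
    then have "b < a" using \<open>a \<noteq> b\<close> by simp
    then show ?thesis using ab xy by (intro exI[of _ b] exI[of _ a]) auto
  qed
qed

lemma cv_formula:
  assumes ab: "a < b" "b < p" "Chg L = {side a, side b}"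
  shows "i \<le> p \<Longrightarrow> cv L i = (cv L 0 \<noteq> ((a < i) \<noteq> (b < i)))"
proof (induction i)
  case 0 then show ?case by simp
next
  case (Suc i)
  have ip: "i < p" using Suc.prems by (rule Suc_le_lessD)
  have "side i \<in> Chg L \<longleftrightarrow> i = a \<or> i = b"
    using ab side_inj ip by auto
  then have "cv L (Suc i) = (cv L i \<noteq> (i = a \<or> i = b))" using chg_side[of i L] by auto
  moreover have "cv L i = (cv L 0 \<noteq> ((a < i) \<noteq> (b < i)))" using Suc.IH[OF less_imp_le[OF ip]] .
  ultimately show ?case using ab(1) by auto
qed

lemma corner_in_vert: "si (side j) \<in> orb \<sigma> (side j)"
  using orb_si_side S.in_orb_self by metis

lemma spec_corner_exists:
  assumes "s \<in> verts D \<sigma>" "s \<inter> out \<noteq> {}"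
  shows "\<exists>i < p. orb \<sigma> (side i) = s"
proof -
  obtain w where w: "w \<in> s" "w \<in> out" using assms by auto
  obtain i where i: "i < p" "si (side i) = w" using corner_side w by blast
  have "orb \<sigma> (side i) = orb \<sigma> w" using orb_si_side[of i] i(2) by simp
  also have "\<dots> = s" using vert_of[OF assms(1) w(1)] by simp
  finally show ?thesis using i by blast
qed

lemma forward_arc:
  assumes L: "L \<subseteq> D" "s0 \<inter> L = {}" "s1 \<subseteq> L" and c2: "card (Chg L) = 2"
  shows "card {d \<in> Chg L. in_arc D \<alpha> \<sigma> s0 s1 True d} = 1 \<and> card {d \<in> Chg L. \<not> in_arc D \<alpha> \<sigma> s0 s1 True d} = 1"
proof -
  obtain a b where ab: "a < b" "b < p" "Chg L = {side a, side b}" using two_idx[OF c2] by blast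
  note F = cv_formula[OF ab]
  have specv: "cv L j \<longleftrightarrow> orb \<sigma> (side j) = s1" if "spec (side j)" for j
  proof -
    have "si (side j) \<in> orb \<sigma> (side j)" by (rule corner_in_vert)
    then show ?thesis using that L s01 unfolding cv_def spec_def by auto
  qed
  obtain ja where ja: "ja \<le> a" "spec (side ja)" "\<forall>k. ja < k \<and> k \<le> a \<longrightarrow> \<not> spec (side k)"
    using LS_exists by blast
  have "in_arc D \<alpha> \<sigma> s0 s1 True (side a) \<longleftrightarrow> cv L ja"
    using in_arc_LSW[OF LSW_side[OF ja]] specv[OF ja(2)] by simp
  also have "cv L ja = cv L 0" using F[of ja] ja ab by simp
  finally have ia: "in_arc D \<alpha> \<sigma> s0 s1 True (side a) \<longleftrightarrow> cv L 0" .
  obtain jb where jb: "jb \<le> b" "spec (side jb)" "\<forall>k. jb < k \<and> k \<le> b \<longrightarrow> \<not> spec (side k)"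
    using LS_exists by blast
  have "a < jb"
  proof (rule ccontr)
    assume "\<not> a < jb"
    then have nospec: "\<not> spec (side k)" if "a < k" "k \<le> b" for k using jb that by auto
    obtain i0 where i0: "i0 < p" "orb \<sigma> (side i0) = s0" using spec_corner_exists[OF s0v s0o] by blast
    obtain i1 where i1: "i1 < p" "orb \<sigma> (side i1) = s1" using spec_corner_exists[OF s1v s1o] by blast
    have sp: "spec (side i0)" "spec (side i1)" using i0 i1 unfolding spec_def by auto
    have "cv L i0 = cv L 0" using F[OF less_imp_le[OF i0(1)]] nospec[of i0] sp ab(1) by (cases "a < i0"; cases "b < i0") auto
    moreover have "cv L i1 = cv L 0" using F[OF less_imp_le[OF i1(1)]] nospec[of i1] sp ab(1) by (cases "a < i1"; cases "b < i1") auto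
    moreover have "\<not> cv L i0" using specv[OF sp(1)] i0 s01 by simp
    moreover have "cv L i1" using specv[OF sp(2)] i1 by simp
    ultimately show False by simp
  qed
  have "in_arc D \<alpha> \<sigma> s0 s1 True (side b) \<longleftrightarrow> cv L jb"
    using in_arc_LSW[OF LSW_side[OF jb]] specv[OF jb(2)] by simp
  also have "cv L jb = (\<not> cv L 0)" using F[of jb] jb ab \<open>a < jb\<close> by simp
  finally have ib: "in_arc D \<alpha> \<sigma> s0 s1 True (side b) \<longleftrightarrow> \<not> cv L 0" .
  have neq: "side a \<noteq> side b"
  proof
    assume "side a = side b"
    then have "a = b" using side_inj[OF less_trans[OF ab(1) ab(2)] ab(2)] by blast
    then show False using ab(1) by simp
  qed
  show ?thesis
  proof (cases "cv L 0")
    case True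
    then have "{d \<in> Chg L. in_arc D \<alpha> \<sigma> s0 s1 True d} = {side a}"
      "{d \<in> Chg L. \<not> in_arc D \<alpha> \<sigma> s0 s1 True d} = {side b}" using ab ia ib neq by auto
    then show ?thesis by simp
  next
    case False
    then have "{d \<in> Chg L. in_arc D \<alpha> \<sigma> s0 s1 True d} = {side b}"
      "{d \<in> Chg L. \<not> in_arc D \<alpha> \<sigma> s0 s1 True d} = {side a}" using ab ia ib neq by auto
    then show ?thesis by simp
  qed
qed

lemma backward_arc:
  assumes L: "L \<subseteq> D" "s0 \<inter> L = {}" "s1 \<inter> L = {}" and c2: "card (Chg L) = 2"
  shows "card {d \<in> Chg L. in_arc D \<alpha> \<sigma> s0 s1 True d} \<noteq> 1"
proof -
  obtain a b where ab: "a < b" "b < p" "Chg L = {side a, side b}" using two_idx[OF c2] by blast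
  note F = cv_formula[OF ab]
  have specv: "\<not> cv L j" if "spec (side j)" for j
  proof -
    have "si (side j) \<in> orb \<sigma> (side j)" by (rule corner_in_vert)
    then show ?thesis using that L unfolding cv_def spec_def by auto
  qed
  have c0: "\<not> cv L 0" using specv spec_sstar unfolding side_def by simp
  obtain jb where jb: "jb \<le> b" "spec (side jb)" "\<forall>k. jb < k \<and> k \<le> b \<longrightarrow> \<not> spec (side k)"
    using LS_exists by blast
  have "jb \<le> a"
  proof (rule ccontr)
    assume "\<not> jb \<le> a"
    then have "cv L jb" using F[of jb] jb ab c0 by simp
    then show False using specv jb by blast
  qed
  have ja: "jb \<le> a" "spec (side jb)" "\<forall>k. jb < k \<and> k \<le> a \<longrightarrow> \<not> spec (side k)"
    using jb \<open>jb \<le> a\<close> ab by auto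
  have "in_arc D \<alpha> \<sigma> s0 s1 True (side a) \<longleftrightarrow> in_arc D \<alpha> \<sigma> s0 s1 True (side b)"
    using in_arc_LSW[OF LSW_side[OF ja]] in_arc_LSW[OF LSW_side[OF jb]] by simp
  have neq: "side a \<noteq> side b"
  proof
    assume "side a = side b"
    then have "a = b" using side_inj[OF less_trans[OF ab(1) ab(2)] ab(2)] by blast
    then show False using ab(1) by simp
  qed
  show ?thesis
  proof (cases "in_arc D \<alpha> \<sigma> s0 s1 True (side a)")
    case True
    then have "{d \<in> Chg L. in_arc D \<alpha> \<sigma> s0 s1 True d} = {side a, side b}"
      using ab \<open>in_arc _ _ _ _ _ _ (side a) \<longleftrightarrow> _\<close> by auto
    note e = this
    show ?thesis unfolding e using neq by simp
  next
    case False
    then have "{d \<in> Chg L. in_arc D \<alpha> \<sigma> s0 s1 True d} = {}"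
      using ab \<open>in_arc _ _ _ _ _ _ (side a) \<longleftrightarrow> _\<close> by auto
    note e = this
    show ?thesis unfolding e by simp
  qed
qed

end


context pm
begin

lemma vreindex:
  assumes "x \<in> D"
  shows "card {c \<in> orb \<sigma> x. g c \<noteq> g (\<sigma> c)} = card {d \<in> orb \<sigma> x. g d \<noteq> g (si d)}"
proof -
  let ?v = "orb \<sigma> x"
  have vD: "?v \<subseteq> D" using S.orb_sub assms by blast
  have "{d \<in> ?v. g d \<noteq> g (si d)} = \<sigma> ` {c \<in> ?v. g c \<noteq> g (\<sigma> c)}"
  proof
    show "{d \<in> ?v. g d \<noteq> g (si d)} \<subseteq> \<sigma> ` {c \<in> ?v. g c \<noteq> g (\<sigma> c)}"
    proof
      fix d assume d: "d \<in> {d \<in> ?v. g d \<noteq> g (si d)}"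
      then have dD: "d \<in> D" using vD by auto
      have "si d \<in> ?v" using S.finv_in_orb assms d by blast
      moreover have "\<sigma> (si d) = d" using S.f_finv dD by blast
      ultimately show "d \<in> \<sigma> ` {c \<in> ?v. g c \<noteq> g (\<sigma> c)}"
        using d by (intro image_eqI[where x="si d"]) auto
    qed
    show "\<sigma> ` {c \<in> ?v. g c \<noteq> g (\<sigma> c)} \<subseteq> {d \<in> ?v. g d \<noteq> g (si d)}"
      using S.orb_f_in S.finv_f vD by auto
  qed
  moreover have "card (\<sigma> ` {c \<in> ?v. g c \<noteq> g (\<sigma> c)}) = card {c \<in> ?v. g c \<noteq> g (\<sigma> c)}"
    by (rule card_image) (use S.f_inj vD in \<open>auto simp: inj_on_def\<close>)
  ultimately show ?thesis by simp
qed

lemma freindex: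
  assumes "x \<in> D"
  shows "card {c \<in> orb \<phi> x. g c \<noteq> g (\<phi> c)} = card {d \<in> D. \<alpha> d \<in> orb \<phi> x \<and> g (si d) \<noteq> g (\<alpha> d)}"
proof -
  let ?f = "orb \<phi> x"
  have fD: "?f \<subseteq> D" using P.orb_sub assms by blast
  have "{d \<in> D. \<alpha> d \<in> ?f \<and> g (si d) \<noteq> g (\<alpha> d)} = \<sigma> ` {c \<in> ?f. g c \<noteq> g (\<phi> c)}"
  proof
    show "{d \<in> D. \<alpha> d \<in> ?f \<and> g (si d) \<noteq> g (\<alpha> d)} \<subseteq> \<sigma> ` {c \<in> ?f. g c \<noteq> g (\<phi> c)}"
    proof
      fix d assume d: "d \<in> {d \<in> D. \<alpha> d \<in> ?f \<and> g (si d) \<noteq> g (\<alpha> d)}"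
      then have dD: "d \<in> D" by auto
      have "si d \<in> ?f" using si_face d assms by blast
      moreover have sd: "\<sigma> (si d) = d" using S.f_finv dD by blast
      moreover have "\<phi> (si d) = \<alpha> d" using sd by simp
      ultimately show "d \<in> \<sigma> ` {c \<in> ?f. g c \<noteq> g (\<phi> c)}"
        using d by (intro image_eqI[where x="si d"]) auto
    qed
    show "\<sigma> ` {c \<in> ?f. g c \<noteq> g (\<phi> c)} \<subseteq> {d \<in> D. \<alpha> d \<in> ?f \<and> g (si d) \<noteq> g (\<alpha> d)}"
    proof
      fix d assume "d \<in> \<sigma> ` {c \<in> ?f. g c \<noteq> g (\<phi> c)}"
      then obtain c where c: "c \<in> ?f" "g c \<noteq> g (\<phi> c)" "d = \<sigma> c" by auto
      have cD: "c \<in> D" using c fD by auto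
      have "\<alpha> d = \<phi> c" using c by simp
      moreover have "\<phi> c \<in> ?f" using P.orb_f_in c by blast
      moreover have "si d = c" using S.finv_f cD c by simp
      ultimately show "d \<in> {d \<in> D. \<alpha> d \<in> ?f \<and> g (si d) \<noteq> g (\<alpha> d)}"
        using c s_in cD by auto
    qed
  qed
  moreover have "card (\<sigma> ` {c \<in> ?f. g c \<noteq> g (\<phi> c)}) = card {c \<in> ?f. g c \<noteq> g (\<phi> c)}"
    by (rule card_image) (use S.f_inj fD in \<open>auto simp: inj_on_def\<close>)
  ultimately show ?thesis by simp
qed

lemma card_one_per_edge:
  assumes "A \<subseteq> D" "\<forall>d\<in>D. (d \<in> A) \<noteq> (\<alpha> d \<in> A)"
  shows "card A = card (edges D \<alpha>)"
proof -
  have "bij_betw (\<lambda>d. {d, \<alpha> d}) A (edges D \<alpha>)"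
    unfolding bij_betw_def
  proof
    show "inj_on (\<lambda>d. {d, \<alpha> d}) A"
    proof (rule inj_onI)
      fix x y assume xy: "x \<in> A" "y \<in> A" "{x, \<alpha> x} = {y, \<alpha> y}"
      show "x = y"
      proof (rule ccontr)
        assume "x \<noteq> y"
        then have "x = \<alpha> y" using xy(3) by (metis doubleton_eq_iff)
        then show False using xy assms by auto
      qed
    qed
    show "(\<lambda>d. {d, \<alpha> d}) ` A = edges D \<alpha>"
    proof
      show "(\<lambda>d. {d, \<alpha> d}) ` A \<subseteq> edges D \<alpha>" using assms(1) unfolding edges_def by auto
      show "edges D \<alpha> \<subseteq> (\<lambda>d. {d, \<alpha> d}) ` A"
      proof
        fix e assume "e \<in> edges D \<alpha>"
        then obtain x where x: "x \<in> D" "e = {x, \<alpha> x}" unfolding edges_def by auto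
        show "e \<in> (\<lambda>d. {d, \<alpha> d}) ` A"
        proof (cases "x \<in> A")
          case True then show ?thesis using x by auto
        next
          case False
          then have "\<alpha> x \<in> A" using assms x by auto
          moreover have "e = {\<alpha> x, \<alpha> (\<alpha> x)}" using x aa by auto
          ultimately show ?thesis by blast
        qed
      qed
    qed
  qed
  then show ?thesis by (rule bij_betw_same_card)
qed

end

context pm2
begin

definition Xof :: "'a set \<Rightarrow> 'a set" where "Xof L = {d \<in> D. (d \<in> L) \<noteq> (si d \<in> L)}"
definition Yof :: "'a set \<Rightarrow> 'a set" where "Yof L = {d \<in> D. (si d \<in> L) \<noteq> (\<alpha> d \<in> L)}"
definition Lof :: "('a \<Rightarrow> nat) \<Rightarrow> 'a set" where "Lof l = {d \<in> D. l d = 1}"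

definition SDV where "SDV = split_dual_verts D \<alpha> \<sigma> out"
abbreviation "dnd \<equiv> dend D \<alpha> \<sigma> out s0 s1"

lemma s0D: "s0 \<subseteq> D" using vert_sub s0v by blast
lemma s1D: "s1 \<subseteq> D" using vert_sub s1v by blast

lemma orb_a_out: "d \<in> D \<Longrightarrow> orb \<phi> (\<alpha> d) = out \<longleftrightarrow> \<alpha> d \<in> out"
  using face_of[OF out] P.in_orb_self by metis

lemma orb_a_face: "d \<in> D \<Longrightarrow> f \<in> faces D \<alpha> \<sigma> \<Longrightarrow> orb \<phi> (\<alpha> d) = f \<longleftrightarrow> \<alpha> d \<in> f"
  using face_of P.in_orb_self by metis

lemma dend_face: assumes "d \<in> D" "f \<in> faces D \<alpha> \<sigma>" "f \<noteq> out"
  shows "dnd d = DFace f \<longleftrightarrow> \<alpha> d \<in> f"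
  using assms orb_a_face[OF assms(1) assms(2)] unfolding dend_def by auto

lemma dend_out: assumes "d \<in> D"
  shows "dnd d = DOut b \<longleftrightarrow> \<alpha> d \<in> out \<and> in_arc D \<alpha> \<sigma> s0 s1 True d = b"
  using assms orb_a_out[OF assms(1)] unfolding dend_def by auto

lemma Y_out: assumes "Y \<subseteq> D"
  shows "{d \<in> Y. dnd d = DOut b} = {d \<in> Y. \<alpha> d \<in> out \<and> in_arc D \<alpha> \<sigma> s0 s1 True d = b}"
  using dend_out assms by blast

lemma Y_face: assumes "Y \<subseteq> D" "f \<in> faces D \<alpha> \<sigma>" "f \<noteq> out"
  shows "{d \<in> Y. dnd d = DFace f} = {d \<in> Y. \<alpha> d \<in> f}"
  using dend_face assms by blast

lemma Chg_Yof: "Chg L = {d \<in> Yof L. \<alpha> d \<in> out}"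
  unfolding Chg_def Yof_def So_def by auto

lemma SDV_cases: "x \<in> SDV \<longleftrightarrow> (\<exists>f. x = DFace f \<and> f \<in> faces D \<alpha> \<sigma> \<and> f \<noteq> out) \<or> (\<exists>b. x = DOut b)"
  unfolding SDV_def split_dual_verts_def by (cases x) auto

lemma forward:
  assumes wl: "weak_labeling D \<alpha> \<sigma> s0 s1 l"
  shows "Xof (Lof l) \<in> two_orientations D \<alpha> \<sigma> s0 s1"
    and "Yof (Lof l) \<in> two_star_orientations D \<alpha> \<sigma> out s0 s1"
proof -
  let ?L = "Lof l"
  have l01: "l d \<in> {0, 1}" if "d \<in> D" for d using wl that unfolding weak_labeling_def by auto
  have leq: "(l d \<noteq> l e) \<longleftrightarrow> ((d \<in> ?L) \<noteq> (e \<in> ?L))" if "d \<in> D" "e \<in> D" for d e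
    using l01[OF that(1)] l01[OF that(2)] that unfolding Lof_def by auto
  have G0: "\<forall>d\<in>s0. l d = 0" "\<forall>d\<in>s1. l d = 1" using wl unfolding weak_labeling_def by auto
  have G1: "\<forall>v\<in>verts D \<sigma> - {s0, s1}. card {d\<in>v. l d \<noteq> l (\<sigma> d)} = 2"
    using wl unfolding weak_labeling_def by auto
  have G2: "\<forall>d\<in>D. (l d = l (si d)) \<noteq> (l (\<alpha> d) = l (si (\<alpha> d)))"
    using wl unfolding weak_labeling_def si_def' by auto
  have G3: "\<forall>f\<in>faces D \<alpha> \<sigma>. card {d\<in>f. l d \<noteq> l (\<phi> d)} = 2"
    using wl unfolding weak_labeling_def by auto
  have X2: "\<forall>d\<in>D. (d \<in> Xof ?L) \<noteq> (\<alpha> d \<in> Xof ?L)"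
  proof
    fix d assume d: "d \<in> D"
    have "\<alpha> d \<in> D" "si d \<in> D" "si (\<alpha> d) \<in> D" using d a_in S.finv_in by auto
    then show "(d \<in> Xof ?L) \<noteq> (\<alpha> d \<in> Xof ?L)"
      using G2 d leq[of d "si d"] leq[of "\<alpha> d" "si (\<alpha> d)"] unfolding Xof_def by auto
  qed
  have face2: "card {d \<in> Yof ?L. \<alpha> d \<in> f} = 2" if f: "f \<in> faces D \<alpha> \<sigma>" for f
  proof -
    obtain x where x: "x \<in> D" "f = orb \<phi> x" using f unfolding faces_def by auto
    have "card {d \<in> Yof ?L. \<alpha> d \<in> f} = card {d \<in> D. \<alpha> d \<in> orb \<phi> x \<and> l (si d) \<noteq> l (\<alpha> d)}"
    proof -
      have "{d \<in> Yof ?L. \<alpha> d \<in> f} = {d \<in> D. \<alpha> d \<in> orb \<phi> x \<and> l (si d) \<noteq> l (\<alpha> d)}"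
        unfolding Yof_def using x leq S.finv_in a_in by auto
      then show ?thesis by simp
    qed
    also have "\<dots> = card {c \<in> orb \<phi> x. l c \<noteq> l (\<phi> c)}" by (rule freindex[OF x(1), symmetric])
    also have "\<dots> = 2" using G3 f x by simp
    finally show ?thesis .
  qed
  show "Xof ?L \<in> two_orientations D \<alpha> \<sigma> s0 s1"
    unfolding two_orientations_def
  proof (intro CollectI conjI ballI)
    show "Xof ?L \<subseteq> D" unfolding Xof_def by auto
    show "\<And>d. d \<in> D \<Longrightarrow> (d \<in> Xof ?L) \<noteq> (\<alpha> d \<in> Xof ?L)" using X2 by blast
    fix v assume v: "v \<in> verts D \<sigma> - {s0, s1}"
    then obtain x where x: "x \<in> D" "v = orb \<sigma> x" unfolding verts_def by auto
    have vD: "v \<subseteq> D" using x S.orb_sub by blast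
    have "v \<inter> Xof ?L = {d \<in> orb \<sigma> x. l d \<noteq> l (si d)}"
      unfolding Xof_def using x vD leq S.finv_in by auto
    then have "card (v \<inter> Xof ?L) = card {d \<in> orb \<sigma> x. l d \<noteq> l (si d)}" by (simp only:)
    also have "\<dots> = card {c \<in> orb \<sigma> x. l c \<noteq> l (\<sigma> c)}" by (rule vreindex[OF x(1), symmetric])
    also have "\<dots> = 2" using G1 v x by simp
    finally show "card (v \<inter> Xof ?L) = 2" .
  qed
  have cChg: "card (Chg ?L) = 2" using face2[OF out] unfolding Chg_Yof .
  have s0L: "s0 \<inter> ?L = {}" using G0 unfolding Lof_def by auto
  have s1L: "s1 \<subseteq> ?L" using G0 s1D unfolding Lof_def by auto
  have LD: "?L \<subseteq> D" unfolding Lof_def by auto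
  note FA = forward_arc[OF LD s0L s1L cChg]
  show "Yof ?L \<in> two_star_orientations D \<alpha> \<sigma> out s0 s1"
    unfolding two_star_orientations_def
  proof (intro CollectI conjI ballI)
    show YD: "Yof ?L \<subseteq> D" unfolding Yof_def by auto
    show "(d \<in> Yof ?L) \<noteq> (\<alpha> d \<in> Yof ?L)" if d: "d \<in> D" for d
    proof -
      have "(d \<in> Xof ?L) \<noteq> (\<alpha> d \<in> Xof ?L)" using X2 d by blast
      moreover have "\<alpha> d \<in> D" "\<alpha> (\<alpha> d) = d" using a_in aa d by auto
      ultimately show ?thesis unfolding Xof_def Yof_def using d by auto
    qed
    fix x assume x: "x \<in> split_dual_verts D \<alpha> \<sigma> out"
    then have "x \<in> SDV" unfolding SDV_def .
    then consider (F) f where "x = DFace f" "f \<in> faces D \<alpha> \<sigma>" "f \<noteq> out" | (O) b where "x = DOut b"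
      unfolding SDV_cases by blast
    then show "card {d \<in> Yof ?L. dnd d = x} = (case x of DOut _ \<Rightarrow> 1 | DFace _ \<Rightarrow> 2)"
    proof cases
      case F
      then show ?thesis using Y_face[OF YD F(2,3)] face2[OF F(2)] by simp
    next
      case O
      have "{d \<in> Yof ?L. dnd d = x} = {d \<in> Chg ?L. in_arc D \<alpha> \<sigma> s0 s1 True d = b}"
        unfolding O Y_out[OF YD] Chg_Yof by auto
      then show ?thesis using FA O by (cases b) auto
    qed
  qed
qed

end


context pm2
begin

lemma cob_XY: "cob L = Pair False ` Xof L \<union> Pair True ` Yof L"
  unfolding cob_def Xof_def Yof_def ..

lemma wl_vals: assumes "weak_labeling D \<alpha> \<sigma> s0 s1 l"
  shows "\<And>d. d \<in> D \<Longrightarrow> l d \<in> {0, 1}" "\<And>d. d \<notin> D \<Longrightarrow> l d = undefined" "\<And>d. d \<in> s0 \<Longrightarrow> l d = 0"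
  using assms unfolding weak_labeling_def PiE_def extensional_def by auto

lemma inj_part:
  assumes wl: "weak_labeling D \<alpha> \<sigma> s0 s1 l" "weak_labeling D \<alpha> \<sigma> s0 s1 l'"
    and eq: "Xof (Lof l) = Xof (Lof l')" "Yof (Lof l) = Yof (Lof l')"
  shows "l = l'"
proof -
  let ?L = "Lof l" and ?L' = "Lof l'"
  have LD: "?L \<subseteq> D" "?L' \<subseteq> D" unfolding Lof_def by auto
  have "cob (sd ?L ?L') = {}" using cob_hom cob_XY eq by simp
  moreover have "sd ?L ?L' \<subseteq> D" using LD sd_sub by blast
  moreover have "sd ?L ?L' \<noteq> D"
  proof
    assume e: "sd ?L ?L' = D"
    obtain w where w: "w \<in> s0" using vert_ne s0v by blast
    have "w \<in> D" using w s0D by auto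
    moreover have "w \<notin> ?L" "w \<notin> ?L'" using wl_vals(3)[OF wl(1) w] wl_vals(3)[OF wl(2) w] unfolding Lof_def by auto
    ultimately show False using e unfolding sd_def by blast
  qed
  ultimately have "sd ?L ?L' = {}" using cob_ker by blast
  then have LL: "?L = ?L'" unfolding sd_def by blast
  show "l = l'"
  proof
    fix d
    show "l d = l' d"
    proof (cases "d \<in> D")
      case True
      have "l d = 1 \<longleftrightarrow> l' d = 1" using LL True unfolding Lof_def by blast
      then show ?thesis using wl_vals(1)[OF wl(1) True] wl_vals(1)[OF wl(2) True] by auto
    next
      case False
      then show ?thesis using wl_vals(2)[OF wl(1)] wl_vals(2)[OF wl(2)] by simp
    qed
  qed
qed

lemma Yface2:
  assumes Y: "Y \<in> two_star_orientations D \<alpha> \<sigma> out s0 s1" and f: "f \<in> faces D \<alpha> \<sigma>"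
  shows "card {d \<in> Y. \<alpha> d \<in> f} = 2"
proof -
  have YD: "Y \<subseteq> D" using Y unfolding two_star_orientations_def by auto
  have cnt: "\<And>x. x \<in> SDV \<Longrightarrow> card {d \<in> Y. dnd d = x} = (case x of DOut _ \<Rightarrow> 1 | DFace _ \<Rightarrow> 2)"
    using Y unfolding two_star_orientations_def SDV_def by auto
  show ?thesis
  proof (cases "f = out")
    case False
    have "DFace f \<in> SDV" using f False unfolding SDV_cases by auto
    then show ?thesis using cnt[of "DFace f"] Y_face[OF YD f False] by simp
  next
    case True
    have u: "{d \<in> Y. \<alpha> d \<in> f} = {d \<in> Y. dnd d = DOut True} \<union> {d \<in> Y. dnd d = DOut False}"
      unfolding Y_out[OF YD] True by auto
    have "card ({d \<in> Y. dnd d = DOut True} \<union> {d \<in> Y. dnd d = DOut False})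
       = card {d \<in> Y. dnd d = DOut True} + card {d \<in> Y. dnd d = DOut False}"
      by (rule card_Un_disjoint) (use finite_subset[OF YD finD] in auto)
    moreover have "DOut True \<in> SDV" "DOut False \<in> SDV" unfolding SDV_cases by auto
    ultimately show ?thesis using u cnt by simp
  qed
qed

lemma sum_verts:
  assumes "X \<subseteq> D"
  shows "card X = (\<Sum>v \<in> verts D \<sigma>. card (v \<inter> X))"
proof -
  have "X = (\<Union>v \<in> verts D \<sigma>. v \<inter> X)"
  proof
    show "X \<subseteq> (\<Union>v \<in> verts D \<sigma>. v \<inter> X)"
      using assms S.in_orb_self unfolding verts_def by blast
  qed auto
  moreover have "card (\<Union>v \<in> verts D \<sigma>. v \<inter> X) = (\<Sum>v \<in> verts D \<sigma>. card (v \<inter> X))"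
  proof (rule card_UN_disjoint)
    show "finite (verts D \<sigma>)" by (rule verts_finite)
    show "\<forall>v\<in>verts D \<sigma>. finite (v \<inter> X)" using vert_sub finD finite_subset by blast
    show "\<forall>v\<in>verts D \<sigma>. \<forall>w\<in>verts D \<sigma>. v \<noteq> w \<longrightarrow> v \<inter> X \<inter> (w \<inter> X) = {}"
      unfolding verts_def using S.orb_disj by blast
  qed
  ultimately show ?thesis by simp
qed

lemma sum_sdv:
  assumes Y: "Y \<in> two_star_orientations D \<alpha> \<sigma> out s0 s1"
  shows "card Y = 2 * card (faces D \<alpha> \<sigma>)"
proof -
  have YD: "Y \<subseteq> D" using Y unfolding two_star_orientations_def by auto
  have cnt: "\<And>x. x \<in> SDV \<Longrightarrow> card {d \<in> Y. dnd d = x} = (case x of DOut _ \<Rightarrow> 1 | DFace _ \<Rightarrow> 2)"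
    using Y unfolding two_star_orientations_def SDV_def by auto
  have finSDV: "finite SDV" unfolding SDV_def split_dual_verts_def using faces_finite by simp
  have dSDV: "dnd d \<in> SDV" if "d \<in> D" for d
  proof (cases "orb \<phi> (\<alpha> d) = out")
    case True then show ?thesis unfolding dend_def SDV_cases by auto
  next
    case False
    have "orb \<phi> (\<alpha> d) \<in> faces D \<alpha> \<sigma>" unfolding faces_def using a_in that by auto
    then show ?thesis using False unfolding dend_def SDV_cases by auto
  qed
  have "Y = (\<Union>x \<in> SDV. {d \<in> Y. dnd d = x})" using dSDV YD by blast
  moreover have "card (\<Union>x \<in> SDV. {d \<in> Y. dnd d = x}) = (\<Sum>x \<in> SDV. card {d \<in> Y. dnd d = x})"
    by (rule card_UN_disjoint) (use finSDV finite_subset[OF YD finD] in auto)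
  moreover have "(\<Sum>x \<in> SDV. card {d \<in> Y. dnd d = x}) = (\<Sum>x \<in> SDV. (case x of DOut _ \<Rightarrow> 1 | DFace _ \<Rightarrow> 2))"
    using cnt by (intro sum.cong) auto
  moreover have "(\<Sum>x \<in> SDV. (case x of DOut _ \<Rightarrow> 1 | DFace _ \<Rightarrow> 2)) = 2 * card (faces D \<alpha> \<sigma>)"
  proof -
    let ?g = "\<lambda>x. (case x of DOut _ \<Rightarrow> 1 | DFace _ \<Rightarrow> 2) :: nat"
    have SD: "SDV = DFace ` (faces D \<alpha> \<sigma> - {out}) \<union> {DOut False, DOut True}"
      unfolding SDV_def split_dual_verts_def ..
    have "sum ?g SDV = sum ?g (DFace ` (faces D \<alpha> \<sigma> - {out})) + sum ?g ({DOut False, DOut True} :: 'a dvert set)"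
      unfolding SD by (rule sum.union_disjoint) (use faces_finite in auto)
    also have "sum ?g (DFace ` (faces D \<alpha> \<sigma> - {out})) = sum (?g \<circ> DFace) (faces D \<alpha> \<sigma> - {out})"
      by (rule sum.reindex) (simp add: inj_on_def)
    also have "\<dots> = sum (\<lambda>_. 2) (faces D \<alpha> \<sigma> - {out})" by simp
    also have "\<dots> = 2 * (card (faces D \<alpha> \<sigma>) - 1)" using out faces_finite by simp
    also have "sum ?g ({DOut False, DOut True} :: 'a dvert set) = 2" by simp
    finally have e: "sum ?g SDV = 2 * (card (faces D \<alpha> \<sigma>) - 1) + 2" .
    have "card (faces D \<alpha> \<sigma>) > 0" using out faces_finite card_gt_0_iff by blast
    then show ?thesis using e by simp
  qed
  ultimately show ?thesis by simp
qed

lemma X_special_empty: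
  assumes X: "X \<in> two_orientations D \<alpha> \<sigma> s0 s1" and Y: "Y \<in> two_star_orientations D \<alpha> \<sigma> out s0 s1"
  shows "s0 \<inter> X = {}" "s1 \<inter> X = {}"
proof -
  have XD: "X \<subseteq> D" and Xa: "\<forall>d\<in>D. (d \<in> X) \<noteq> (\<alpha> d \<in> X)"
    and X2: "\<forall>v\<in>verts D \<sigma> - {s0, s1}. card (v \<inter> X) = 2"
    using X unfolding two_orientations_def by auto
  have YD: "Y \<subseteq> D" and Ya: "\<forall>d\<in>D. (d \<in> Y) \<noteq> (\<alpha> d \<in> Y)"
    using Y unfolding two_star_orientations_def by auto
  let ?V = "verts D \<sigma>" and ?E = "card (edges D \<alpha>)" and ?F = "card (faces D \<alpha> \<sigma>)"
  have cX: "card X = ?E" using card_one_per_edge XD Xa by blast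
  have cY: "card Y = ?E" using card_one_per_edge YD Ya by blast
  have EF: "?E = 2 * ?F" using cY sum_sdv[OF Y] by simp
  have eu: "card ?V + ?F = ?E + 2" by (rule euler')
  have sumX: "card X = (\<Sum>v \<in> ?V. card (v \<inter> X))" by (rule sum_verts[OF XD])
  have finV: "finite ?V" by (rule verts_finite)
  have "(\<Sum>v \<in> ?V. card (v \<inter> X)) = card (s0 \<inter> X) + (\<Sum>v \<in> ?V - {s0}. card (v \<inter> X))"
    using sum.remove[OF finV s0v] by simp
  also have "(\<Sum>v \<in> ?V - {s0}. card (v \<inter> X)) = card (s1 \<inter> X) + (\<Sum>v \<in> ?V - {s0} - {s1}. card (v \<inter> X))"
    using sum.remove[of "?V - {s0}" s1] finV s1v s01 by simp
  also have "(\<Sum>v \<in> ?V - {s0} - {s1}. card (v \<inter> X)) = (\<Sum>v \<in> ?V - {s0} - {s1}. 2)"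
    using X2 by (intro sum.cong) auto
  also have "\<dots> = 2 * card (?V - {s0} - {s1})" by simp
  also have "card (?V - {s0} - {s1}) = card ?V - 2"
    using finV s0v s1v s01 by (simp add: card_Diff_singleton_if)
  finally have "?E = card (s0 \<inter> X) + (card (s1 \<inter> X) + 2 * (card ?V - 2))" using cX sumX by simp
  moreover have "card ?V \<ge> 2"
  proof -
    have "{s0, s1} \<subseteq> ?V" using s0v s1v by auto
    then have "card {s0, s1} \<le> card ?V" using card_mono finV by blast
    then show ?thesis using s01 by simp
  qed
  ultimately have "card (s0 \<inter> X) + card (s1 \<inter> X) = 0" using EF eu by linarith
  moreover have "finite (s0 \<inter> X)" "finite (s1 \<inter> X)" using XD finD finite_subset by auto
  ultimately show "s0 \<inter> X = {}" "s1 \<inter> X = {}" by auto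
qed

lemma orbit_const:
  assumes "s \<in> verts D \<sigma>" "s \<inter> Xof L = {}"
  shows "s \<subseteq> L \<or> s \<inter> L = {}"
proof -
  obtain w where w: "w \<in> D" "s = orb \<sigma> w" using assms unfolding verts_def by auto
  have "((\<sigma> ^^ n) w \<in> L) = (w \<in> L)" for n
  proof (induction n)
    case 0 then show ?case by simp
  next
    case (Suc n)
    let ?y = "(\<sigma> ^^ n) w"
    have yD: "?y \<in> D" using S.funpow_in w by blast
    have "\<sigma> ?y \<in> s" using w S.funpow_in_orb[of "Suc n" w] by simp
    then have "\<sigma> ?y \<notin> Xof L" using assms by auto
    then have "(\<sigma> ?y \<in> L) = (si (\<sigma> ?y) \<in> L)" using s_in yD unfolding Xof_def by auto
    then show ?case using S.finv_f yD Suc by simp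
  qed
  then have "\<forall>d \<in> s. (d \<in> L) = (w \<in> L)" using w unfolding orb_def by auto
  then show ?thesis by blast
qed

lemma XY_compl: assumes "L \<subseteq> D" shows "Xof (D - L) = Xof L" "Yof (D - L) = Yof L"
  unfolding Xof_def Yof_def using S.finv_in a_in by auto

lemma surj_part:
  assumes X: "X \<in> two_orientations D \<alpha> \<sigma> s0 s1" and Y: "Y \<in> two_star_orientations D \<alpha> \<sigma> out s0 s1"
  shows "\<exists>l. weak_labeling D \<alpha> \<sigma> s0 s1 l \<and> Xof (Lof l) = X \<and> Yof (Lof l) = Y"
proof -
  have XD: "X \<subseteq> D" and Xa: "\<forall>d\<in>D. (d \<in> X) \<noteq> (\<alpha> d \<in> X)"
    and X2: "\<forall>v\<in>verts D \<sigma> - {s0, s1}. card (v \<inter> X) = 2"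
    using X unfolding two_orientations_def by auto
  have YD: "Y \<subseteq> D" and Ya: "\<forall>d\<in>D. (d \<in> Y) \<noteq> (\<alpha> d \<in> Y)"
    using Y unfolding two_star_orientations_def by auto
  have cntO: "card {d \<in> Y. dnd d = DOut True} = 1"
    using Y unfolding two_star_orientations_def split_dual_verts_def by auto
  note sX = X_special_empty[OF X Y]
  define z where "z = Pair False ` X \<union> Pair True ` Y"
  have zSt: "z \<subseteq> St" unfolding z_def St_def using XD YD by auto
  have zF: "(False, d) \<in> z \<longleftrightarrow> d \<in> X" for d unfolding z_def by auto
  have zT: "(True, d) \<in> z \<longleftrightarrow> d \<in> Y" for d unfolding z_def by auto
  have "even (card (z \<inter> cs c))" if c: "c \<in> Cyc" for c
    using c unfolding Cyc_def
  proof (elim UnE imageE)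
    fix v assume v: "v \<in> verts D \<sigma>" "c = Inl v"
    have "z \<inter> cs c = Pair False ` (v \<inter> X)" unfolding v z_def by auto
    then have "card (z \<inter> cs c) = card (v \<inter> X)" by (simp add: card_image inj_on_def)
    moreover have "card (v \<inter> X) = 0 \<or> card (v \<inter> X) = 2"
      using X2 v sX by (cases "v = s0 \<or> v = s1") (auto simp: Int_commute)
    ultimately show ?thesis by auto
  next
    fix f y assume fy: "c = Inr y" "y = Inl f" "f \<in> faces D \<alpha> \<sigma>"
    have "z \<inter> cs c = Pair True ` {d \<in> Y. \<alpha> d \<in> f}" unfolding fy z_def using YD by auto
    then have "card (z \<inter> cs c) = card {d \<in> Y. \<alpha> d \<in> f}" by (simp add: card_image inj_on_def)
    then show ?thesis using Yface2[OF Y fy(3)] by simp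
  next
    fix e y assume ey: "c = Inr y" "y = Inr e" "e \<in> edges D \<alpha>"
    then obtain x where x: "x \<in> D" "e = {x, \<alpha> x}" unfolding edges_def by auto
    have "card (z \<inter> cs c) = of_bool (x \<in> X) + of_bool (\<alpha> x \<in> X) + of_bool (x \<in> Y) + of_bool (\<alpha> x \<in> Y)"
      unfolding ey x cs_simps card_edge_steps[OF x(1)] zF zT by simp
    then show ?thesis using Xa Ya x by auto
  qed
  then have "Phi z = {}" unfolding Phi_def by auto
  then obtain L0 where L0: "L0 \<subseteq> D" "cob L0 = z" using cocycle zSt by blast
  have XL0: "Xof L0 = X"
  proof -
    have "d \<in> Xof L0 \<longleftrightarrow> (False, d) \<in> cob L0" for d unfolding cob_XY by auto
    then show ?thesis using L0 zF by auto
  qed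
  have YL0: "Yof L0 = Y"
  proof -
    have "d \<in> Yof L0 \<longleftrightarrow> (True, d) \<in> cob L0" for d unfolding cob_XY by auto
    then show ?thesis using L0 zT by auto
  qed
  obtain L where L: "L \<subseteq> D" "Xof L = X" "Yof L = Y" "s0 \<inter> L = {}"
  proof (cases "s0 \<subseteq> L0")
    case True
    have "s0 \<inter> (D - L0) = {}" using True by auto
    then show ?thesis using that[of "D - L0"] XY_compl[OF L0(1)] XL0 YL0 by auto
  next
    case False
    then have "s0 \<inter> L0 = {}" using orbit_const[OF s0v] sX XL0 by auto
    then show ?thesis using that[of L0] L0 XL0 YL0 by auto
  qed
  have s1L: "s1 \<subseteq> L"
  proof -
    have "s1 \<subseteq> L \<or> s1 \<inter> L = {}" using orbit_const[OF s1v] sX L by auto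
    moreover have "s1 \<inter> L \<noteq> {}"
    proof
      assume s1e: "s1 \<inter> L = {}"
      have "card (Chg L) = 2" unfolding Chg_Yof L(3) using Yface2[OF Y out] .
      then have "card {d \<in> Chg L. in_arc D \<alpha> \<sigma> s0 s1 True d} \<noteq> 1"
        using backward_arc[OF L(1) L(4) s1e] by blast
      moreover have "{d \<in> Chg L. in_arc D \<alpha> \<sigma> s0 s1 True d} = {d \<in> Y. dnd d = DOut True}"
        unfolding Chg_Yof L(3) Y_out[OF YD] by auto
      ultimately show False using cntO by simp
    qed
    ultimately show ?thesis by blast
  qed
  define l :: "'a \<Rightarrow> nat" where "l d = (if d \<in> D then (if d \<in> L then 1 else 0) else undefined)" for d
  have lL: "Lof l = L" unfolding Lof_def l_def using L(1) by auto
  have leq: "(l d \<noteq> l e) \<longleftrightarrow> ((d \<in> L) \<noteq> (e \<in> L))" if "d \<in> D" "e \<in> D" for d e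
    using that unfolding l_def by auto
  have "weak_labeling D \<alpha> \<sigma> s0 s1 l"
    unfolding weak_labeling_def
  proof (intro conjI ballI)
    show "l \<in> D \<rightarrow>\<^sub>E {0, 1}" unfolding l_def PiE_def extensional_def by auto
    show "\<And>d. d \<in> s0 \<Longrightarrow> l d = 0" using L(4) s0D unfolding l_def by auto
    show "\<And>d. d \<in> s1 \<Longrightarrow> l d = 1" using s1L s1D unfolding l_def by auto
  next
    fix v assume v: "v \<in> verts D \<sigma> - {s0, s1}"
    then obtain x where x: "x \<in> D" "v = orb \<sigma> x" unfolding verts_def by auto
    have vD: "v \<subseteq> D" using x S.orb_sub by blast
    have "card {d \<in> v. l d \<noteq> l (\<sigma> d)} = card {d \<in> orb \<sigma> x. l d \<noteq> l (si d)}"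
      unfolding x(2) by (rule vreindex[OF x(1)])
    also have "{d \<in> orb \<sigma> x. l d \<noteq> l (si d)} = v \<inter> X"
      unfolding L(2)[symmetric] Xof_def using x vD leq S.finv_in by auto
    also have "card (v \<inter> X) = 2" using X2 v by simp
    finally show "card {d \<in> v. l d \<noteq> l (\<sigma> d)} = 2" .
  next
    fix d assume d: "d \<in> D"
    have ds: "\<alpha> d \<in> D" "si d \<in> D" "si (\<alpha> d) \<in> D" using d a_in S.finv_in by auto
    have "(d \<in> Xof L) \<noteq> (\<alpha> d \<in> Xof L)" using Xa d L(2) by simp
    then have "((d \<in> L) \<noteq> (si d \<in> L)) \<noteq> ((\<alpha> d \<in> L) \<noteq> (si (\<alpha> d) \<in> L))"
      unfolding Xof_def using d ds by simp
    then have "(l d = l (si d)) \<noteq> (l (\<alpha> d) = l (si (\<alpha> d)))"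
      using leq[OF d ds(2)] leq[OF ds(1) ds(3)] by argo
    then show "(l d = l (inv_into D \<sigma> d)) \<noteq> (l (\<alpha> d) = l (inv_into D \<sigma> (\<alpha> d)))"
      unfolding si_def' .
  next
    fix f assume f: "f \<in> faces D \<alpha> \<sigma>"
    then obtain x where x: "x \<in> D" "f = orb \<phi> x" unfolding faces_def by auto
    have "card {d \<in> f. l d \<noteq> l (\<phi> d)} = card {d \<in> D. \<alpha> d \<in> orb \<phi> x \<and> l (si d) \<noteq> l (\<alpha> d)}"
      unfolding x(2) by (rule freindex[OF x(1)])
    also have "{d \<in> D. \<alpha> d \<in> orb \<phi> x \<and> l (si d) \<noteq> l (\<alpha> d)} = {d \<in> Y. \<alpha> d \<in> f}"
      unfolding L(3)[symmetric] Yof_def x(2) using leq S.finv_in a_in by auto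
    also have "card {d \<in> Y. \<alpha> d \<in> f} = 2" using Yface2[OF Y f] .
    finally show "card {d \<in> f. l d \<noteq> l (\<phi> d)} = 2" .
  qed
  then show ?thesis using lL L by blast
qed

theorem main_bij:
  "bij_betw (\<lambda>l. (Xof (Lof l), Yof (Lof l))) (weak_labelings D \<alpha> \<sigma> s0 s1)
     (two_orientations D \<alpha> \<sigma> s0 s1 \<times> two_star_orientations D \<alpha> \<sigma> out s0 s1)"
  unfolding bij_betw_def
proof
  show "inj_on (\<lambda>l. (Xof (Lof l), Yof (Lof l))) (weak_labelings D \<alpha> \<sigma> s0 s1)"
    by (rule inj_onI) (use inj_part in \<open>auto simp: weak_labelings_def\<close>)
  show "(\<lambda>l. (Xof (Lof l), Yof (Lof l))) ` weak_labelings D \<alpha> \<sigma> s0 s1 =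
      two_orientations D \<alpha> \<sigma> s0 s1 \<times> two_star_orientations D \<alpha> \<sigma> out s0 s1"
  proof
    show "(\<lambda>l. (Xof (Lof l), Yof (Lof l))) ` weak_labelings D \<alpha> \<sigma> s0 s1 \<subseteq>
      two_orientations D \<alpha> \<sigma> s0 s1 \<times> two_star_orientations D \<alpha> \<sigma> out s0 s1"
      using forward unfolding weak_labelings_def by auto
    show "two_orientations D \<alpha> \<sigma> s0 s1 \<times> two_star_orientations D \<alpha> \<sigma> out s0 s1 \<subseteq>
      (\<lambda>l. (Xof (Lof l), Yof (Lof l))) ` weak_labelings D \<alpha> \<sigma> s0 s1"
    proof
      fix XY assume "XY \<in> two_orientations D \<alpha> \<sigma> s0 s1 \<times> two_star_orientations D \<alpha> \<sigma> out s0 s1"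
      then obtain X Y where XY: "XY = (X, Y)" "X \<in> two_orientations D \<alpha> \<sigma> s0 s1"
        "Y \<in> two_star_orientations D \<alpha> \<sigma> out s0 s1" by auto
      obtain l where "weak_labeling D \<alpha> \<sigma> s0 s1 l" "Xof (Lof l) = X" "Yof (Lof l) = Y"
        using surj_part[OF XY(2,3)] by blast
      then show "XY \<in> (\<lambda>l. (Xof (Lof l), Yof (Lof l))) ` weak_labelings D \<alpha> \<sigma> s0 s1"
        unfolding weak_labelings_def using XY(1) by (intro image_eqI[where x=l]) auto
    qed
  qed
qed

end

theorem proposition4:
  fixes D :: "'d set" and \<alpha> \<sigma> :: "'d \<Rightarrow> 'd" and out s0 s1 :: "'d set"
  assumes "plane_map D \<alpha> \<sigma>"
    and "out \<in> faces D \<alpha> \<sigma>"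
    and "s0 \<in> verts D \<sigma>" and "s1 \<in> verts D \<sigma>" and "s0 \<noteq> s1"
    and "s0 \<inter> out \<noteq> {}" and "s1 \<inter> out \<noteq> {}"
  shows "\<exists>f. bij_betw f (weak_labelings D \<alpha> \<sigma> s0 s1)
                 (two_orientations D \<alpha> \<sigma> s0 s1 \<times> two_star_orientations D \<alpha> \<sigma> out s0 s1)"
proof -
  interpret pm2 D \<alpha> \<sigma> out s0 s1
    using assms by unfold_locales (auto simp: pm_def)
  show ?thesis using main_bij by blast
qed


end
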